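(* Let $X$ be a weak complicial set, $x\in X_0$ a vertex and $n\ge 1$. Let $\alpha,\alpha',\beta,\beta'$ be $n$-simplices of $X$ whose restrictions to $\partial\Delta[n]$ are constant at $x$, with $\alpha\sim_{\partial\Delta[n]}\alpha'$ and $\beta\sim_{\partial\Delta[n]}\beta'$. Let $\theta:\Delta^n[n+1]\to X$ be any stratified map whose face $d_{n-1}\theta$ is $\alpha$, whose face $d_{n+1}\theta$ is $\beta$, and whose other faces $d_i\theta$, $i\notin\{n-1,n,n+1\}$, are constant at $x$; and let $\theta'$ be any such map for $\alpha',\beta'$. Then $d_n\theta\sim_{\partial\Delta[n]} d_n\theta'$. (Such $\theta,\theta'$ exist, and the class $[d_n\theta]$ in $\tau_n(X,x)$ thus depends only on $[\alpha]$ and $[\beta]$.)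
   Context: A stratified simplicial set is a pair $(X,tX)$ where $X$ is a simplicial set and $tX$ is a set of simplices of $X$ (thin simplices) containing all degenerate simplices and no $0$-simplices; stratified maps are simplicial maps preserving thin simplices. A regular stratified subset $(X,tX)\subset(Y,tY)$ means $X\subset Y$, $tX=X\cap tY$. For $n\ge1$, $\Delta[n]_t$ is $\Delta[n]$ with thin simplices the degenerate ones and $\mathrm{Id}_{[n]}$. For $k\in[n]$, $\Delta^k[n]$ is $\Delta[n]$ with thin simplices the degenerate ones and all $\alpha:[m]\to[n]$ with $\{k-1,k,k+1\}\cap[n]\subset\mathrm{Im}(\alpha)$; $\Lambda^k[n]$ is the regular stratified subset of $\Delta^k[n]$ generated by the faces $\delta_i$, $i\neq k$; $\Delta^k[n]''$ (resp. $\Lambda^k[n]'$) is $\Delta^k[n]$ (resp. $\Lambda^k[n]$) with additionally all its $(n-1)$-simplices thin; $\Delta^k[n]'=\Delta^k[n]\cup\Lambda^k[n]'$. A weak complicial set is a stratified simplicial set with the right lifting property against $\Lambda^k[n]\hookrightarrow\Delta^k[n]$ ($n\ge1$, $k\in[n]$) and $\Delta^k[n]'\hookrightarrow\Delta^k[n]''$ ($n\ge2$, $k\in[n]$). The product $X\circledast Y$ has underlying simplicial set $X\times Y$, with $(x,y)$ thin iff $x$ and $y$ are thin. For stratified maps $f,g:A\to X$ and an inclusion $B\hookrightarrow A$ with $f|_B=g|_B$, $f\sim_B g$ means there is a stratified map $H:A\circledast\Delta[1]_t\to X$ with $H|_{A\times\{0\}}=f$, $H|_{A\times\{1\}}=g$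 and $H|_{B\circledast\Delta[1]_t}=f|_B\circ\mathrm{proj}_B$. Here $n$-simplices $\alpha$ of $X$ are regarded as stratified maps $\Delta[n]\to X$ where $\Delta[n]$ carries the stratification with only degenerate simplices thin, and $\partial\Delta[n]$ the induced one. For $n\ge1$, $\tau_n(X,x)$ is the set of equivalence classes under $\sim_{\partial\Delta[n]}$ of $n$-simplices $\alpha$ of $X$ whose restriction to $\partial\Delta[n]$ is constant at $x$. *)

theory Defs
  imports Main
begin

text \<open>A morphism [m] -> [n] of the simplex category is a monotone map
  {0..m} -> {0..n}, represented canonically as a function nat => nat that is 0
  outside {0..m}.\<close>

definition dmor :: "nat \<Rightarrow> nat \<Rightarrow> (nat \<Rightarrow> nat) \<Rightarrow> bool" where
  "dmor m n f \<longleftrightarrow> (\<forall>i\<le>m. f i \<le> n) \<and> (\<forall>i j. i \<le> j \<longrightarrow> j \<le> m \<longrightarrow> f i \<le> f j)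
     \<and> (\<forall>i. m < i \<longrightarrow> f i = 0)"

definition didx :: "nat \<Rightarrow> nat \<Rightarrow> nat" where
  "didx n = (\<lambda>i. if i \<le> n then i else 0)"

definition dcomp :: "nat \<Rightarrow> (nat \<Rightarrow> nat) \<Rightarrow> (nat \<Rightarrow> nat) \<Rightarrow> nat \<Rightarrow> nat" where
  "dcomp l f g = (\<lambda>i. if i \<le> l then f (g i) else 0)"

text \<open>A stratified simplicial set: simplices of each dimension, the action of
  simplicial operators (Act l m g x is x.g for g : [l] -> [m]), and thin simplices.\<close>
record 'a sset =
  Simp :: "nat \<Rightarrow> 'a set"
  Act :: "nat \<Rightarrow> nat \<Rightarrow> (nat \<Rightarrow> nat) \<Rightarrow> 'a \<Rightarrow> 'a"
  Thin :: "nat \<Rightarrow> 'a set"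

definition simplicial_set :: "('a, 'b) sset_scheme \<Rightarrow> bool" where
  "simplicial_set X \<longleftrightarrow>
     (\<forall>l m g x. dmor l m g \<longrightarrow> x \<in> Simp X m \<longrightarrow> Act X l m g x \<in> Simp X l)
   \<and> (\<forall>n x. x \<in> Simp X n \<longrightarrow> Act X n n (didx n) x = x)
   \<and> (\<forall>l m n g f x. dmor l m g \<longrightarrow> dmor m n f \<longrightarrow> x \<in> Simp X n \<longrightarrow>
        Act X l m g (Act X m n f x) = Act X l n (dcomp l f g) x)"

definition degenerate :: "('a, 'b) sset_scheme \<Rightarrow> nat \<Rightarrow> 'a \<Rightarrow> bool" where
  "degenerate X m x \<longleftrightarrow> x \<in> Simp X m \<and>
     (\<exists>k<m. \<exists>g y. dmor m k g \<and> y \<in> Simp X k \<and> x = Act X m k g y)"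

definition stratified :: "('a, 'b) sset_scheme \<Rightarrow> bool" where
  "stratified X \<longleftrightarrow> simplicial_set X \<and> (\<forall>m. Thin X m \<subseteq> Simp X m)
     \<and> (\<forall>m x. degenerate X m x \<longrightarrow> x \<in> Thin X m) \<and> Thin X 0 = {}"

text \<open>Stratified maps (only their values on simplices matter).\<close>
definition smap :: "('a, 'c) sset_scheme \<Rightarrow> ('b, 'd) sset_scheme \<Rightarrow> (nat \<Rightarrow> 'a \<Rightarrow> 'b) \<Rightarrow> bool" where
  "smap A Y f \<longleftrightarrow> (\<forall>m a. a \<in> Simp A m \<longrightarrow> f m a \<in> Simp Y m)
     \<and> (\<forall>l m g a. dmor l m g \<longrightarrow> a \<in> Simp A m \<longrightarrow> f l (Act A l m g a) = Act Y l m g (f m a))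
     \<and> (\<forall>m a. a \<in> Thin A m \<longrightarrow> f m a \<in> Thin Y m)"

text \<open>Right lifting property of X against an inclusion A into B (A a stratified
  subset of B with the same carrier type).\<close>
definition rlp :: "('a, 'c) sset_scheme \<Rightarrow> 'b sset \<Rightarrow> 'b sset \<Rightarrow> bool" where
  "rlp X A B \<longleftrightarrow> (\<forall>f. smap A X f \<longrightarrow>
      (\<exists>g. smap B X g \<and> (\<forall>m a. a \<in> Simp A m \<longrightarrow> g m a = f m a)))"

definition strat_delta :: "nat \<Rightarrow> (nat \<Rightarrow> (nat \<Rightarrow> nat) set) \<Rightarrow> (nat \<Rightarrow> nat) sset" where
  "strat_delta n T = \<lparr>Simp = (\<lambda>m. {f. dmor m n f}), Act = (\<lambda>l m g a. dcomp l a g), Thin = T\<rparr>"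

definition dgn :: "nat \<Rightarrow> nat \<Rightarrow> (nat \<Rightarrow> nat) set" where
  "dgn n m = {a. degenerate (strat_delta n (\<lambda>_. {})) m a}"

definition Delta :: "nat \<Rightarrow> (nat \<Rightarrow> nat) sset" where
  "Delta n = strat_delta n (dgn n)"

definition Delta_t :: "nat \<Rightarrow> (nat \<Rightarrow> nat) sset" where
  "Delta_t n = strat_delta n (\<lambda>m. dgn n m \<union> (if m = n then {didx n} else {}))"

definition hornset :: "nat \<Rightarrow> nat \<Rightarrow> nat set" where
  "hornset k n = {j. j \<le> n \<and> (j + 1 = k \<or> j = k \<or> j = k + 1)}"

definition Delta_k :: "nat \<Rightarrow> nat \<Rightarrow> (nat \<Rightarrow> nat) sset" where
  "Delta_k k n = strat_delta n
     (\<lambda>m. dgn n m \<union> {a. dmor m n a \<and> hornset k n \<subseteq> a ` {0..m}})"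

definition horn_simp :: "nat \<Rightarrow> nat \<Rightarrow> nat \<Rightarrow> (nat \<Rightarrow> nat) set" where
  "horn_simp k n m = {a. dmor m n a \<and> (\<exists>i\<le>n. i \<noteq> k \<and> i \<notin> a ` {0..m})}"

definition Lambda :: "nat \<Rightarrow> nat \<Rightarrow> (nat \<Rightarrow> nat) sset" where
  "Lambda k n = \<lparr>Simp = horn_simp k n, Act = (\<lambda>l m g a. dcomp l a g),
      Thin = (\<lambda>m. Thin (Delta_k k n) m \<inter> horn_simp k n m)\<rparr>"

definition Delta_k'' :: "nat \<Rightarrow> nat \<Rightarrow> (nat \<Rightarrow> nat) sset" where
  "Delta_k'' k n = (Delta_k k n)\<lparr>Thin := (\<lambda>m. Thin (Delta_k k n) m \<union>
      (if m + 1 = n then {a. dmor m n a} else {}))\<rparr>"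

definition Lambda' :: "nat \<Rightarrow> nat \<Rightarrow> (nat \<Rightarrow> nat) sset" where
  "Lambda' k n = (Lambda k n)\<lparr>Thin := (\<lambda>m. Thin (Lambda k n) m \<union>
      (if m + 1 = n then horn_simp k n m else {}))\<rparr>"

definition Delta_k' :: "nat \<Rightarrow> nat \<Rightarrow> (nat \<Rightarrow> nat) sset" where
  "Delta_k' k n = (Delta_k k n)\<lparr>Thin := (\<lambda>m. Thin (Delta_k k n) m \<union> Thin (Lambda' k n) m)\<rparr>"

definition bdry :: "nat \<Rightarrow> (nat \<Rightarrow> nat) sset" where
  "bdry n = \<lparr>Simp = (\<lambda>m. {a. dmor m n a \<and> a ` {0..m} \<noteq> {0..n}}),
      Act = (\<lambda>l m g a. dcomp l a g),
      Thin = (\<lambda>m. {a. a \<in> dgn n m \<and> a ` {0..m} \<noteq> {0..n}})\<rparr>"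

definition coface :: "nat \<Rightarrow> nat \<Rightarrow> nat \<Rightarrow> nat" where
  "coface n i = (\<lambda>j. if j \<le> n then (if j < i then j else j + 1) else 0)"

definition weak_complicial :: "('a, 'b) sset_scheme \<Rightarrow> bool" where
  "weak_complicial X \<longleftrightarrow> stratified X
     \<and> (\<forall>n k. 1 \<le> n \<longrightarrow> k \<le> n \<longrightarrow> rlp X (Lambda k n) (Delta_k k n))
     \<and> (\<forall>n k. 2 \<le> n \<longrightarrow> k \<le> n \<longrightarrow> rlp X (Delta_k' k n) (Delta_k'' k n))"

definition sprod :: "('a, 'c) sset_scheme \<Rightarrow> ('b, 'd) sset_scheme \<Rightarrow> ('a \<times> 'b) sset" where
  "sprod A B = \<lparr>Simp = (\<lambda>m. Simp A m \<times> Simp B m),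
      Act = (\<lambda>l m g p. (Act A l m g (fst p), Act B l m g (snd p))),
      Thin = (\<lambda>m. Thin A m \<times> Thin B m)\<rparr>"

definition const0 :: "nat \<Rightarrow> nat \<Rightarrow> nat" where "const0 m = (\<lambda>i. 0)"
definition const1 :: "nat \<Rightarrow> nat \<Rightarrow> nat" where "const1 m = (\<lambda>i. if i \<le> m then 1 else 0)"

definition htpy :: "('a, 'c) sset_scheme \<Rightarrow> ('b, 'd) sset_scheme \<Rightarrow> ('b, 'e) sset_scheme
    \<Rightarrow> (nat \<Rightarrow> 'b \<Rightarrow> 'a) \<Rightarrow> (nat \<Rightarrow> 'b \<Rightarrow> 'a) \<Rightarrow> bool" where
  "htpy X A B f g \<longleftrightarrow> smap A X f \<and> smap A X g
     \<and> (\<forall>m b. b \<in> Simp B m \<longrightarrow> f m b = g m b)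
     \<and> (\<exists>H. smap (sprod A (Delta_t 1)) X H
         \<and> (\<forall>m a. a \<in> Simp A m \<longrightarrow> H m (a, const0 m) = f m a \<and> H m (a, const1 m) = g m a)
         \<and> (\<forall>m b t. b \<in> Simp B m \<longrightarrow> t \<in> Simp (Delta_t 1) m \<longrightarrow> H m (b, t) = f m b))"

text \<open>The n-simplex a of X regarded as a map Delta[n] -> X (Yoneda).\<close>
definition ymap :: "('a, 'b) sset_scheme \<Rightarrow> nat \<Rightarrow> 'a \<Rightarrow> nat \<Rightarrow> (nat \<Rightarrow> nat) \<Rightarrow> 'a" where
  "ymap X n a = (\<lambda>m g. Act X m n g a)"

definition shtpy :: "('a, 'b) sset_scheme \<Rightarrow> nat \<Rightarrow> 'a \<Rightarrow> 'a \<Rightarrow> bool" where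
  "shtpy X n a b \<longleftrightarrow> htpy X (Delta n) (bdry n) (ymap X n a) (ymap X n b)"

definition vconst :: "('a, 'b) sset_scheme \<Rightarrow> nat \<Rightarrow> 'a \<Rightarrow> 'a" where
  "vconst X m x = Act X m 0 (\<lambda>_. 0) x"

definition bdry_const :: "('a, 'b) sset_scheme \<Rightarrow> nat \<Rightarrow> 'a \<Rightarrow> 'a \<Rightarrow> bool" where
  "bdry_const X n x a \<longleftrightarrow> a \<in> Simp X n \<and>
     (\<forall>m g. g \<in> Simp (bdry n) m \<longrightarrow> Act X m n g a = vconst X m x)"

end

theory Submission
  imports Defs
begin

lemma dmor_coface: "dmor n (Suc n) (coface n i)"
  unfolding dmor_def coface_def by auto

lemma dmor_dcomp: "dmor l m g \<Longrightarrow> dmor m n f \<Longrightarrow> dmor l n (dcomp l f g)"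
  unfolding dmor_def dcomp_def by auto

lemma dmor_didx: "dmor n n (didx n)"
  unfolding dmor_def didx_def by auto

lemma dcomp_didx_left: "dmor l m g \<Longrightarrow> dcomp l (didx m) g = g"
  unfolding dmor_def dcomp_def didx_def by (rule ext) auto

lemma dcomp_didx_right: "dmor m n f \<Longrightarrow> dcomp m f (didx m) = f"
  unfolding dmor_def dcomp_def didx_def by (rule ext) auto

lemma dmor_zero: "dmor m n f \<Longrightarrow> m < i \<Longrightarrow> f i = 0"
  unfolding dmor_def by auto

lemma dmor_le: "dmor m n f \<Longrightarrow> i \<le> m \<Longrightarrow> f i \<le> n"
  unfolding dmor_def by auto

lemma dmor_mono: "dmor m n f \<Longrightarrow> i \<le> j \<Longrightarrow> j \<le> m \<Longrightarrow> f i \<le> f j"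
  unfolding dmor_def by auto

lemma dmor_const0: "dmor m 0 (\<lambda>_. 0)"
  unfolding dmor_def by auto

lemma dmor_eqI: "dmor m n f \<Longrightarrow> dmor m n' g \<Longrightarrow> (\<And>i. i \<le> m \<Longrightarrow> f i = g i) \<Longrightarrow> f = g"
  by (rule ext) (metis dmor_zero not_le)

locale sset_ctx =
  fixes X :: "('a,'b) sset_scheme"
  assumes ss: "simplicial_set X"
begin

lemma act_simp: "dmor l m g \<Longrightarrow> y \<in> Simp X m \<Longrightarrow> Act X l m g y \<in> Simp X l"
  using ss unfolding simplicial_set_def by blast

lemma act_id: "y \<in> Simp X n \<Longrightarrow> Act X n n (didx n) y = y"
  using ss unfolding simplicial_set_def by blast

lemma act_comp: "dmor l m g \<Longrightarrow> dmor m n f \<Longrightarrow> y \<in> Simp X n \<Longrightarrow>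
   Act X l m g (Act X m n f y) = Act X l n (dcomp l f g) y"
  using ss unfolding simplicial_set_def by blast


definition fa :: "nat \<Rightarrow> nat \<Rightarrow> 'a \<Rightarrow> 'a" where
  "fa K i z = Act X K (Suc K) (coface K i) z"

lemma fa_simp: "z \<in> Simp X (Suc K) \<Longrightarrow> fa K i z \<in> Simp X K"
  unfolding fa_def by (rule act_simp[OF dmor_coface])

end

definition rm :: "nat \<Rightarrow> (nat \<Rightarrow> nat) \<Rightarrow> nat \<Rightarrow> nat" where
  "rm r a = (\<lambda>t. if a t < r then a t else a t - 1)"

lemma rm_dmor:
  assumes a: "dmor m (Suc K) a" and r: "r \<le> Suc K" and nr: "r \<notin> a ` {0..m}"
  shows "dmor m K (rm r a)"
  unfolding dmor_def
proof (intro conjI allI impI)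
  fix i assume i: "i \<le> m"
  have "a i \<le> Suc K" using dmor_le[OF a i] .
  moreover have "a i \<noteq> r" using nr i by auto
  ultimately show "rm r a i \<le> K" using r unfolding rm_def by auto
next
  fix i j assume ij: "i \<le> j" "j \<le> m"
  have le: "a i \<le> a j" using dmor_mono[OF a ij] .
  have "a i \<noteq> r" "a j \<noteq> r" using nr ij by auto
  then show "rm r a i \<le> rm r a j" using le unfolding rm_def by auto
next
  fix i assume "m < i"
  then have "a i = 0" using dmor_zero[OF a] by auto
  then show "rm r a i = 0" unfolding rm_def by auto
qed

lemma rm_fact:
  assumes a: "dmor m (Suc K) a" and r: "r \<le> Suc K" and nr: "r \<notin> a ` {0..m}"
  shows "dcomp m (coface K r) (rm r a) = a"
proof (rule ext)
  fix t show "dcomp m (coface K r) (rm r a) t = a t"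
  proof (cases "t \<le> m")
    case True
    have "a t \<le> Suc K" using dmor_le[OF a True] .
    moreover have "a t \<noteq> r" using nr True by auto
    ultimately show ?thesis using True r unfolding dcomp_def coface_def rm_def by auto
  next
    case False
    then show ?thesis using dmor_zero[OF a] unfolding dcomp_def by auto
  qed
qed

lemma rm_dcomp: "rm r (dcomp l a g) = dcomp l (rm r a) g"
  unfolding rm_def dcomp_def by (rule ext) auto


lemma coface_comm:
  assumes "i < r" "r \<le> Suc (Suc K)"
  shows "dcomp K (coface (Suc K) r) (coface K i) = dcomp K (coface (Suc K) i) (coface K (r - 1))"
  using assms unfolding dcomp_def coface_def by (rule_tac ext) auto

definition codeg :: "nat \<Rightarrow> nat \<Rightarrow> nat \<Rightarrow> nat" where
  "codeg m i = (\<lambda>t. if t \<le> m then (if t \<le> i then t else t - 1) else 0)"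

lemma dmor_codeg: "i \<le> m \<Longrightarrow> dmor (Suc m) m (codeg (Suc m) i)"
  unfolding dmor_def codeg_def by auto

lemma noninj_fact:
  assumes u: "dmor (Suc m) N u" and i: "i \<le> m" and eq: "u i = u (Suc i)"
  shows "u = dcomp (Suc m) (dcomp m u (coface m i)) (codeg (Suc m) i)"
proof (rule ext)
  fix t show "u t = dcomp (Suc m) (dcomp m u (coface m i)) (codeg (Suc m) i) t"
  proof (cases "t \<le> Suc m")
    case True
    then show ?thesis using i eq unfolding dcomp_def coface_def codeg_def
      by (cases "t < i"; cases "t = i"; auto)
  next
    case False
    then show ?thesis using dmor_zero[OF u] unfolding dcomp_def by auto
  qed
qed

lemma dgn_noninj:
  assumes "a \<in> dgn N m"
  shows "\<exists>i<m. a i = a (Suc i)"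
proof (rule ccontr)
  assume H: "\<not> (\<exists>i<m. a i = a (Suc i))"
  from assms obtain k g y where k: "k < m" and g: "dmor m k g" and y: "dmor k N y"
    and ag: "a = dcomp m y g" and am: "dmor m N a"
    unfolding dgn_def degenerate_def strat_delta_def by auto
  have sm: "a i < a (Suc i)" if "i < m" for i
    using H that dmor_mono[OF am, of i "Suc i"] by fastforce
  have smono: "a i < a j" if "i < j" "j \<le> m" for i j
    using that
  proof (induction j)
    case 0 then show ?case by simp
  next
    case (Suc j)
    then show ?case using sm[of j] by (cases "i = j") auto
  qed
  have "inj_on g {0..m}"
  proof (rule inj_onI)
    fix i j assume "i \<in> {0..m}" "j \<in> {0..m}" "g i = g j"
    then have "a i = a j" using ag unfolding dcomp_def by auto
    then show "i = j" using smono \<open>i \<in> {0..m}\<close> \<open>j \<in> {0..m}\<close>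
      by (metis atLeastAtMost_iff less_irrefl nat_neq_iff)
  qed
  moreover have "g ` {0..m} \<subseteq> {0..k}" using dmor_le[OF g] by auto
  ultimately have "card {0..m} \<le> card {0..k}" by (meson card_inj_on_le finite_atLeastAtMost)
  then show False using k by simp
qed

lemma smono_le:
  assumes "\<And>i. i < m \<Longrightarrow> u i < u (Suc i)"
  shows "t \<le> m \<Longrightarrow> t + u 0 \<le> u t"
proof (induction t)
  case 0 then show ?case by simp
next
  case (Suc t) then show ?case using assms[of t] by simp
qed

lemma smono_le2:
  assumes "\<And>i. i < m \<Longrightarrow> u i < u (Suc i)"
  shows "t \<le> m \<Longrightarrow> u t + (m - t) \<le> u m"
proof (induction "m - t" arbitrary: t)
  case 0 then show ?case by simp
next
  case (Suc d)
  then have "Suc t \<le> m" by simp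
  with Suc(1)[of "Suc t"] Suc(2) have "u (Suc t) + (m - Suc t) \<le> u m" by simp
  moreover have "u t < u (Suc t)" using assms \<open>Suc t \<le> m\<close> by simp
  ultimately show ?case using \<open>Suc t \<le> m\<close> by simp
qed

lemma smono_surj_id:
  assumes u: "dmor m K u" and sm: "\<And>i. i < m \<Longrightarrow> u i < u (Suc i)"
    and surj: "\<And>v. v \<le> K \<Longrightarrow> v \<in> u ` {0..m}"
  shows "m = K \<and> u = didx K"
proof -
  obtain t0 where t0: "t0 \<le> m" "u t0 = 0" using surj[of 0] by auto
  have "t0 + u 0 \<le> u t0" using smono_le[where m=m and u=u, OF sm t0(1)] by blast
  then have u0: "u 0 = 0" "t0 = 0" using t0 by auto
  obtain t1 where t1: "t1 \<le> m" "u t1 = K" using surj[of K] by auto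
  have "u t1 + (m - t1) \<le> u m" using smono_le2[where m=m and u=u, OF sm t1(1)] by blast
  moreover have "u m \<le> K" using dmor_le[OF u] by simp
  ultimately have "t1 = m" "u m = K" using t1 by auto
  have "m \<le> K" using smono_le[where m=m and u=u and t=m, OF sm] u0 \<open>u m = K\<close> by simp
  have "K \<le> m"
  proof -
    have "u ` {0..m} \<supseteq> {0..K}" using surj by auto
    then have "card {0..K} \<le> card (u ` {0..m})" using card_mono[of "u ` {0..m}" "{0..K}"] by simp
    also have "\<dots> \<le> card {0..m}" by (rule card_image_le) simp
    finally show ?thesis by simp
  qed
  have "K = m" using \<open>m \<le> K\<close> \<open>K \<le> m\<close> by simp
  have "u t = t" if "t \<le> m" for t
    using smono_le[where m=m and u=u, OF sm that] smono_le2[where m=m and u=u, OF sm that] u0 \<open>u m = K\<close> \<open>K = m\<close> that by simp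
  then have "u = didx K" using \<open>K = m\<close>
    using dmor_zero[OF u] by (intro ext) (auto simp: didx_def)
  with \<open>K = m\<close> show ?thesis by simp
qed

locale wcx = sset_ctx X for X :: "'a sset" +
  fixes x :: 'a
  assumes wc: "weak_complicial X" and x0: "x \<in> Simp X 0"
begin

lemma strat: "stratified X" using wc unfolding weak_complicial_def by simp

lemma thin_simp: "y \<in> Thin X m \<Longrightarrow> y \<in> Simp X m"
  using strat unfolding stratified_def by blast

lemma deg_thin: "degenerate X m y \<Longrightarrow> y \<in> Thin X m"
  using strat unfolding stratified_def by blast

lemma act_rm:
  assumes "y \<in> Simp X (Suc K)" "dmor m (Suc K) a" "r \<le> Suc K" "r \<notin> a ` {0..m}"
  shows "Act X m (Suc K) a y = Act X m K (rm r a) (fa K r y)"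
  unfolding fa_def
  using act_comp[OF rm_dmor[OF assms(2-4)] dmor_coface assms(1)] rm_fact[OF assms(2-4)] by simp

lemma vconst_simp: "vconst X m x \<in> Simp X m"
  unfolding vconst_def by (rule act_simp[OF dmor_const0 x0])

lemma act_vconst: "dmor l m g \<Longrightarrow> Act X l m g (vconst X m x) = vconst X l x"
  unfolding vconst_def
  apply (subst act_comp[OF _ dmor_const0 x0], assumption)
  apply (rule arg_cong[where f="\<lambda>h. Act X l 0 h x"])
  unfolding dcomp_def by auto

lemma fa_vconst: "fa K i (vconst X (Suc K) x) = vconst X K x"
  unfolding fa_def by (rule act_vconst[OF dmor_coface])

lemma vconst_thin: "1 \<le> m \<Longrightarrow> vconst X m x \<in> Thin X m"
proof (rule deg_thin)
  assume "1 \<le> m"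
  then have "0 < m" by simp
  moreover have "vconst X m x = Act X m 0 (\<lambda>_. 0) x" unfolding vconst_def by simp
  ultimately show "degenerate X m (vconst X m x)"
    unfolding degenerate_def using vconst_simp x0 dmor_const0 by blast
qed

lemma fa_fa:
  assumes "i < r" "r \<le> Suc (Suc K)" and z: "z \<in> Simp X (Suc (Suc K))"
  shows "fa K i (fa (Suc K) r z) = fa K (r - 1) (fa (Suc K) i z)"
  unfolding fa_def
  using act_comp[of K "Suc K" "coface K i" "Suc (Suc K)" "coface (Suc K) r" z, OF dmor_coface dmor_coface z]
        act_comp[of K "Suc K" "coface K (r - 1)" "Suc (Suc K)" "coface (Suc K) i" z, OF dmor_coface dmor_coface z]
        coface_comm[OF assms(1,2)] by simp

lemma noninj_thin:
  assumes u: "dmor m N u" and i: "i < m" and eq: "u i = u (Suc i)" and y: "y \<in> Simp X N"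
  shows "Act X m N u y \<in> Thin X m"
proof -
  obtain m' where m: "m = Suc m'" using i by (cases m) auto
  have im: "i \<le> m'" using i m by simp
  have d1: "dmor m' N (dcomp m' u (coface m' i))" using dmor_dcomp[OF dmor_coface] u m by simp
  have "Act X m N u y = Act X m N (dcomp (Suc m') (dcomp m' u (coface m' i)) (codeg (Suc m') i)) y"
    using noninj_fact[of m' N u i] u m im eq by simp
  also have "\<dots> = Act X m m' (codeg (Suc m') i) (Act X m' N (dcomp m' u (coface m' i)) y)"
    using act_comp[OF dmor_codeg[OF im] d1 y] m by simp
  finally have eq2: "Act X m N u y = Act X m m' (codeg (Suc m') i) (Act X m' N (dcomp m' u (coface m' i)) y)" .
  show ?thesis
    apply (rule deg_thin)
    unfolding degenerate_def
    using act_simp[OF u y] eq2 m dmor_codeg[OF im] act_simp[OF d1 y] by auto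
qed

end

lemma smono_endo_id:
  assumes u: "dmor m m u" and sm: "\<And>i. i < m \<Longrightarrow> u i < u (Suc i)"
  shows "u = didx m"
proof -
  have "u t = t" if "t \<le> m" for t
    using smono_le[where m=m and u=u, OF sm that] smono_le2[where m=m and u=u, OF sm that] dmor_le[OF u, of m]
    by simp
  then show ?thesis using dmor_zero[OF u] by (intro ext) (auto simp: didx_def)
qed

lemma noninj_or_smono:
  assumes "dmor m N u"
  shows "(\<exists>i<m. u i = u (Suc i)) \<or> (\<forall>i<m. u i < u (Suc i))"
proof (cases "\<exists>i<m. u i = u (Suc i)")
  case False
  have "u i < u (Suc i)" if "i < m" for i
    using dmor_mono[OF assms, of i "Suc i"] that False by (simp add: le_neq_implies_less)
  then show ?thesis by blast
qed simp

lemma coface_inj: "coface K i s = coface K i s' \<Longrightarrow> s \<le> K \<Longrightarrow> s' \<le> K \<Longrightarrow> s = s'"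
  unfolding coface_def by (auto split: if_splits)

lemma hornset_two: "k \<le> N \<Longrightarrow> 1 \<le> N \<Longrightarrow> \<exists>a b. a \<noteq> b \<and> a \<in> hornset k N \<and> b \<in> hornset k N"
  unfolding hornset_def
  apply (cases "k < N")
   apply (rule exI[of _ k], rule exI[of _ "Suc k"], simp)
  apply (rule exI[of _ k], rule exI[of _ "k - 1"], auto)
  done

lemma two_dim: fixes m :: nat assumes "a \<noteq> b" "a \<in> v ` {0..m}" "b \<in> v ` {0..m}" shows "1 \<le> m"
proof (rule ccontr)
  assume "\<not> 1 \<le> m"
  then have "m = 0" by simp
  then show False using assms by auto
qed

lemma rm_coface: "rm i (coface K i) = didx K"
  unfolding rm_def coface_def didx_def by (rule ext) auto

lemma rm_rm:
  assumes "i < i'" "\<And>t. t \<le> m \<Longrightarrow> a t \<noteq> i \<and> a t \<noteq> i'" "\<And>t. m < t \<Longrightarrow> a t = 0"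
  shows "rm (i' - 1) (rm i a) = rm i (rm i' a)"
proof (rule ext)
  fix t show "rm (i' - 1) (rm i a) t = rm i (rm i' a) t"
    using assms(1) assms(2)[of t] assms(3)[of t] unfolding rm_def by (cases "t \<le> m") auto
qed

lemma rm_image: "dmor m (Suc K) a \<Longrightarrow> r \<le> Suc K \<Longrightarrow> r \<notin> a ` {0..m} \<Longrightarrow>
   (\<lambda>t. coface K r (rm r a t)) ` {0..m} = a ` {0..m}"
proof -
  assume a: "dmor m (Suc K) a" "r \<le> Suc K" "r \<notin> a ` {0..m}"
  have "coface K r (rm r a t) = a t" if "t \<le> m" for t
    using fun_cong[OF rm_fact[OF a], of t] that unfolding dcomp_def by simp
  then show ?thesis by (intro image_cong) auto
qed

context wcx
begin

lemma thin_check: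
  assumes y: "y \<in> Thin X (Suc K)" and ab: "a \<noteq> b" "a \<in> H" "b \<in> H"
    and fc: "\<And>s. s \<le> Suc K \<Longrightarrow> coface (Suc K) i s \<notin> H \<Longrightarrow> fa K s y = vconst X K x"
    and u: "dmor m (Suc K) u" and HH: "H \<subseteq> (\<lambda>t. coface (Suc K) i (u t)) ` {0..m}"
  shows "Act X m (Suc K) u y \<in> Thin X m"
proof -
  have ys: "y \<in> Simp X (Suc K)" using thin_simp[OF y] .
  have "a \<in> (\<lambda>t. coface (Suc K) i (u t)) ` {0..m}" "b \<in> (\<lambda>t. coface (Suc K) i (u t)) ` {0..m}"
    using ab HH by auto
  then have m1: "1 \<le> m" by (rule two_dim[OF ab(1), where v="\<lambda>t. coface (Suc K) i (u t)"])
  consider "\<exists>i<m. u i = u (Suc i)" | "\<forall>i<m. u i < u (Suc i)" using noninj_or_smono[OF u] by blast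
  then show ?thesis
  proof cases
    case 1 then show ?thesis using noninj_thin[OF u _ _ ys] by blast
  next
    case 2
    show ?thesis
    proof (cases "\<forall>v\<le>Suc K. v \<in> u ` {0..m}")
      case True
      then have "m = Suc K \<and> u = didx (Suc K)" using smono_surj_id[OF u] 2 by blast
      then show ?thesis using act_id[OF ys] y by simp
    next
      case False
      then obtain s where s: "s \<le> Suc K" "s \<notin> u ` {0..m}" by blast
      have "coface (Suc K) i s \<notin> H"
      proof
        assume "coface (Suc K) i s \<in> H"
        then obtain t where t: "t \<le> m" "coface (Suc K) i s = coface (Suc K) i (u t)" using HH by force
        then have "s = u t" using coface_inj[OF t(2) s(1) dmor_le[OF u t(1)]] by simp
        then show False using s t by auto
      qed
      then have "fa K s y = vconst X K x" using fc s by blast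
      then have "Act X m (Suc K) u y = vconst X m x"
        using act_rm[OF ys u s] act_vconst[OF rm_dmor[OF u s]] by simp
      then show ?thesis using vconst_thin[OF m1] by simp
    qed
  qed
qed


lemma horn_fill:
  fixes K k :: nat and y :: "nat \<Rightarrow> 'a"
  assumes k: "k \<le> Suc (Suc K)"
    and ys: "\<And>i. i \<le> Suc (Suc K) \<Longrightarrow> i \<noteq> k \<Longrightarrow> y i \<in> Simp X (Suc K)"
    and compat: "\<And>i r. i < r \<Longrightarrow> r \<le> Suc (Suc K) \<Longrightarrow> i \<noteq> k \<Longrightarrow> r \<noteq> k \<Longrightarrow> fa K i (y r) = fa K (r - 1) (y i)"
    and thin: "\<And>i m u. i \<le> Suc (Suc K) \<Longrightarrow> i \<noteq> k \<Longrightarrow> i \<notin> hornset k (Suc (Suc K)) \<Longrightarrow> dmor m (Suc K) u \<Longrightarrow>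
        hornset k (Suc (Suc K)) \<subseteq> (\<lambda>t. coface (Suc K) i (u t)) ` {0..m} \<Longrightarrow> Act X m (Suc K) u (y i) \<in> Thin X m"
  shows "\<exists>z. z \<in> Thin X (Suc (Suc K)) \<and> (\<forall>i \<le> Suc (Suc K). i \<noteq> k \<longrightarrow> fa (Suc K) i z = y i)
     \<and> ((\<forall>i \<le> Suc (Suc K). i \<noteq> k \<longrightarrow> y i \<in> Thin X (Suc K)) \<longrightarrow> fa (Suc K) k z \<in> Thin X (Suc K))"
proof -
  define N where "N = Suc (Suc K)"
  have gen: "Act X m (Suc K) (rm i a) (y i) = Act X m (Suc K) (rm i' a) (y i')"
    if lt: "i < i'" and a: "dmor m N a" and i: "i \<le> N" "i \<noteq> k" "i \<notin> a ` {0..m}"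
      and i': "i' \<le> N" "i' \<noteq> k" "i' \<notin> a ` {0..m}" for m a i i'
  proof -
    have aN: "dmor m (Suc (Suc K)) a" using a N_def by simp
    have d1: "dmor m (Suc K) (rm i a)" using rm_dmor[OF aN] i N_def by simp
    have d2: "dmor m (Suc K) (rm i' a)" using rm_dmor[OF aN] i' N_def by simp
    have n1: "i' - 1 \<notin> rm i a ` {0..m}"
    proof
      assume "i' - 1 \<in> rm i a ` {0..m}"
      then obtain t where "t \<le> m" "rm i a t = i' - 1" by auto
      moreover have "a t \<noteq> i" "a t \<noteq> i'" using \<open>t \<le> m\<close> i i' by auto
      ultimately show False using lt unfolding rm_def by (auto split: if_splits)
    qed
    have n2: "i \<notin> rm i' a ` {0..m}"
    proof
      assume "i \<in> rm i' a ` {0..m}"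
      then obtain t where "t \<le> m" "rm i' a t = i" by auto
      moreover have "a t \<noteq> i" "a t \<noteq> i'" using \<open>t \<le> m\<close> i i' by auto
      ultimately show False using lt unfolding rm_def by (auto split: if_splits)
    qed
    have yi: "y i \<in> Simp X (Suc K)" using ys i N_def by simp
    have yi': "y i' \<in> Simp X (Suc K)" using ys i' N_def by simp
    have "Act X m (Suc K) (rm i a) (y i) = Act X m K (rm (i' - 1) (rm i a)) (fa K (i' - 1) (y i))"
      using act_rm[OF yi d1 _ n1] i' N_def by simp
    also have "fa K (i' - 1) (y i) = fa K i (y i')" using compat[of i i'] lt i i' N_def by simp
    also have "rm (i' - 1) (rm i a) = rm i (rm i' a)"
    proof (rule rm_rm[OF lt])
      fix t assume "t \<le> m" then show "a t \<noteq> i \<and> a t \<noteq> i'" using i i' by force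
    next
      fix t assume "m < t" then show "a t = 0" using dmor_zero[OF a] by simp
    qed
    also have "Act X m K (rm i (rm i' a)) (fa K i (y i')) = Act X m (Suc K) (rm i' a) (y i')"
      using act_rm[OF yi' d2 _ n2] i i' lt N_def by simp
    finally show ?thesis .
  qed
  have wd: "Act X m (Suc K) (rm i a) (y i) = Act X m (Suc K) (rm i' a) (y i')"
    if a: "dmor m N a" and i: "i \<le> N" "i \<noteq> k" "i \<notin> a ` {0..m}"
      and i': "i' \<le> N" "i' \<noteq> k" "i' \<notin> a ` {0..m}" for m a i i'
  proof -
    consider "i < i'" | "i = i'" | "i' < i" by linarith
    then show ?thesis
    proof cases
      case 1 then show ?thesis using gen[OF 1 a i i'] by simp
    next
      case 2 then show ?thesis by simp
    next
      case 3 then show ?thesis using gen[OF 3 a i' i] by simp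
    qed
  qed
  define ch where "ch m a = (SOME i. i \<le> N \<and> i \<noteq> k \<and> i \<notin> a ` {0..m})" for m and a :: "nat \<Rightarrow> nat"
  have ch: "ch m a \<le> N \<and> ch m a \<noteq> k \<and> ch m a \<notin> a ` {0..m}" if "a \<in> horn_simp k N m" for m a
  proof -
    have "\<exists>i. i \<le> N \<and> i \<noteq> k \<and> i \<notin> a ` {0..m}" using that unfolding horn_simp_def by auto
    then show ?thesis unfolding ch_def by (rule someI_ex)
  qed
  define f where "f m a = Act X m (Suc K) (rm (ch m a) a) (y (ch m a))" for m a
  have hs: "dmor m N a" if "a \<in> horn_simp k N m" for m a using that unfolding horn_simp_def by auto
  have fval: "f m a = Act X m (Suc K) (rm i a) (y i)"
    if a: "a \<in> horn_simp k N m" and i: "i \<le> N" "i \<noteq> k" "i \<notin> a ` {0..m}" for m a i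
    unfolding f_def using wd[OF hs[OF a] _ _ _ i] ch[OF a] by blast
  have dN: "dmor m (Suc K) (rm i a)" if "dmor m N a" "i \<le> N" "i \<notin> a ` {0..m}" for m a i
    using rm_dmor[of m "Suc K" a i] that N_def by simp
  have fsm: "smap (Lambda k N) X f"
    unfolding smap_def
  proof (intro conjI allI impI)
    fix m a assume a: "a \<in> Simp (Lambda k N) m"
    then have a': "a \<in> horn_simp k N m" unfolding Lambda_def by simp
    show "f m a \<in> Simp X m"
      unfolding f_def using act_simp[OF dN[OF hs[OF a']] ys] ch[OF a'] N_def by simp
  next
    fix l m g a assume g: "dmor l m g" and a: "a \<in> Simp (Lambda k N) m"
    then have a': "a \<in> horn_simp k N m" unfolding Lambda_def by simp
    define i where "i = ch m a"
    have i: "i \<le> N" "i \<noteq> k" "i \<notin> a ` {0..m}" using ch[OF a'] i_def by auto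
    have ag: "dmor l N (dcomp l a g)" using dmor_dcomp[OF g hs[OF a']] .
    have ig: "i \<notin> dcomp l a g ` {0..l}"
      using i(3) dmor_le[OF g] unfolding dcomp_def by auto
    have ag': "dcomp l a g \<in> horn_simp k N l" unfolding horn_simp_def using ag ig i by auto
    have yi: "y i \<in> Simp X (Suc K)" using ys i N_def by simp
    have "f l (Act (Lambda k N) l m g a) = f l (dcomp l a g)" unfolding Lambda_def by simp
    also have "\<dots> = Act X l (Suc K) (rm i (dcomp l a g)) (y i)" by (rule fval[OF ag' i(1,2) ig])
    also have "\<dots> = Act X l (Suc K) (dcomp l (rm i a) g) (y i)" by (simp add: rm_dcomp)
    also have "\<dots> = Act X l m g (Act X m (Suc K) (rm i a) (y i))"
      using act_comp[OF g dN[OF hs[OF a'] i(1,3)] yi] by simp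
    also have "Act X m (Suc K) (rm i a) (y i) = f m a" unfolding f_def i_def ..
    finally show "f l (Act (Lambda k N) l m g a) = Act X l m g (f m a)" .
  next
    fix m a assume a: "a \<in> Thin (Lambda k N) m"
    then have a': "a \<in> horn_simp k N m" and th: "a \<in> Thin (Delta_k k N) m" unfolding Lambda_def by auto
    define i where "i = ch m a"
    have i: "i \<le> N" "i \<noteq> k" "i \<notin> a ` {0..m}" using ch[OF a'] i_def by auto
    have yi: "y i \<in> Simp X (Suc K)" using ys i N_def by simp
    have fm: "f m a = Act X m (Suc K) (rm i a) (y i)" unfolding f_def i_def ..
    have d: "dmor m (Suc K) (rm i a)" by (rule dN[OF hs[OF a'] i(1,3)])
    from th consider "a \<in> dgn N m" | "hornset k N \<subseteq> a ` {0..m}"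
      unfolding Delta_k_def strat_delta_def by auto
    then show "f m a \<in> Thin X m"
    proof cases
      case 1
      then obtain t where t: "t < m" "a t = a (Suc t)" using dgn_noninj by blast
      then have "rm i a t = rm i a (Suc t)" unfolding rm_def by simp
      then show ?thesis using noninj_thin[OF d t(1) _ yi] fm by simp
    next
      case 2
      then have "i \<notin> hornset k N" using i by blast
      moreover have "(\<lambda>t. coface (Suc K) i (rm i a t)) ` {0..m} = a ` {0..m}"
        using rm_image[of m "Suc K" a i] hs[OF a'] i N_def by simp
      ultimately show ?thesis using thin[OF _ i(2) _ d] i 2 fm N_def by simp
    qed
  qed
  have N1: "1 \<le> N" "2 \<le> N" using N_def by auto
  have kN: "k \<le> N" using k N_def by simp
  have "rlp X (Lambda k N) (Delta_k k N)" using wc N1 kN unfolding weak_complicial_def by blast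
  then obtain g where g: "smap (Delta_k k N) X g" and gf: "\<And>m a. a \<in> Simp (Lambda k N) m \<Longrightarrow> g m a = f m a"
    unfolding rlp_def using fsm by blast
  define z where "z = g N (didx N)"
  have didxN: "didx N \<in> Simp (Delta_k k N) N" "didx N \<in> Thin (Delta_k k N) N"
    unfolding Delta_k_def strat_delta_def hornset_def using dmor_didx by (auto simp: didx_def image_iff)
  have zthin: "z \<in> Thin X N" using g didxN(2) unfolding smap_def z_def by blast
  have face: "fa (Suc K) i z = g (Suc K) (coface (Suc K) i)" for i
  proof -
    have "g (Suc K) (Act (Delta_k k N) (Suc K) N (coface (Suc K) i) (didx N)) = Act X (Suc K) N (coface (Suc K) i) (g N (didx N))"
      using g didxN(1) dmor_coface[of "Suc K" i] N_def unfolding smap_def by blast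
    moreover have "Act (Delta_k k N) (Suc K) N (coface (Suc K) i) (didx N) = coface (Suc K) i"
      unfolding Delta_k_def strat_delta_def using dcomp_didx_left[OF dmor_coface] N_def by simp
    ultimately show ?thesis unfolding fa_def z_def N_def by simp
  qed
  have cof_horn: "coface (Suc K) i \<in> horn_simp k N (Suc K)" if "i \<le> N" "i \<noteq> k" for i
    unfolding horn_simp_def using that dmor_coface[of "Suc K" i] N_def by (auto simp: coface_def)
  have gy: "g (Suc K) (coface (Suc K) i) = y i" if i: "i \<le> N" "i \<noteq> k" for i
  proof -
    have "g (Suc K) (coface (Suc K) i) = f (Suc K) (coface (Suc K) i)"
      using gf cof_horn[OF i] unfolding Lambda_def by simp
    also have "\<dots> = Act X (Suc K) (Suc K) (rm i (coface (Suc K) i)) (y i)"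
      by (rule fval[OF cof_horn[OF i] i]) (auto simp: coface_def)
    also have "\<dots> = y i" using rm_coface act_id ys i N_def by simp
    finally show ?thesis .
  qed
  have part3: "fa (Suc K) k z \<in> Thin X (Suc K)" if allthin: "\<forall>i \<le> Suc (Suc K). i \<noteq> k \<longrightarrow> y i \<in> Thin X (Suc K)"
  proof -
    have "smap (Delta_k' k N) X g"
      unfolding smap_def
    proof (intro conjI allI impI)
      fix m a assume "a \<in> Simp (Delta_k' k N) m"
      then show "g m a \<in> Simp X m" using g unfolding smap_def Delta_k'_def by simp
    next
      fix l m h a assume "dmor l m h" "a \<in> Simp (Delta_k' k N) m"
      then show "g l (Act (Delta_k' k N) l m h a) = Act X l m h (g m a)"
        using g unfolding smap_def Delta_k'_def by simp
    next
      fix m a assume a: "a \<in> Thin (Delta_k' k N) m"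
      then consider "a \<in> Thin (Delta_k k N) m" | "a \<in> Thin (Lambda k N) m" | "m + 1 = N" "a \<in> horn_simp k N m"
        unfolding Delta_k'_def Lambda'_def by (auto split: if_splits)
      then show "g m a \<in> Thin X m"
      proof cases
        case 1 then show ?thesis using g unfolding smap_def by blast
      next
        case 2 then show ?thesis using g unfolding smap_def Lambda_def by auto
      next
        case 3
        define i where "i = ch m a"
        have i: "i \<le> N" "i \<noteq> k" "i \<notin> a ` {0..m}" using ch[OF 3(2)] i_def by auto
        have m: "m = Suc K" using 3(1) N_def by simp
        have "g m a = f m a" using gf 3(2) unfolding Lambda_def by simp
        also have "\<dots> = Act X m (Suc K) (rm i a) (y i)" unfolding f_def i_def ..
        finally have ga: "g m a = Act X m (Suc K) (rm i a) (y i)" .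
        have d: "dmor m (Suc K) (rm i a)" by (rule dN[OF hs[OF 3(2)] i(1,3)])
        have yi: "y i \<in> Thin X (Suc K)" using allthin i N_def by simp
        consider "\<exists>t<m. rm i a t = rm i a (Suc t)" | "\<forall>t<m. rm i a t < rm i a (Suc t)"
          using noninj_or_smono[OF d] by blast
        then show ?thesis
        proof cases
          case 1
          then obtain t where t: "t < m" "rm i a t = rm i a (Suc t)" by blast
          show ?thesis using noninj_thin[OF d t thin_simp[OF yi]] ga by simp
        next
          case 2
          have "rm i a = didx (Suc K)" using smono_endo_id[of "Suc K" "rm i a"] d 2 m by simp
          then show ?thesis using ga act_id[OF thin_simp[OF yi]] yi m by simp
        qed
      qed
    qed
    moreover have "rlp X (Delta_k' k N) (Delta_k'' k N)" using wc N1 kN unfolding weak_complicial_def by blast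
    ultimately obtain g' where g': "smap (Delta_k'' k N) X g'"
      and g'g: "\<And>m a. a \<in> Simp (Delta_k' k N) m \<Longrightarrow> g' m a = g m a"
      unfolding rlp_def by blast
    have "coface (Suc K) k \<in> Thin (Delta_k'' k N) (Suc K)"
      unfolding Delta_k''_def using dmor_coface N_def by simp
    then have "g' (Suc K) (coface (Suc K) k) \<in> Thin X (Suc K)" using g' unfolding smap_def by blast
    moreover have "g' (Suc K) (coface (Suc K) k) = g (Suc K) (coface (Suc K) k)"
      using g'g[of "coface (Suc K) k" "Suc K"] dmor_coface N_def
      unfolding Delta_k'_def Delta_k_def strat_delta_def by simp
    ultimately show ?thesis using face by simp
  qed
  show ?thesis
    apply (rule exI[of _ z])
    using zthin face gy part3 N_def by auto
qed

end

definition tface :: "(nat \<Rightarrow> nat \<Rightarrow> 'a) \<Rightarrow> nat \<Rightarrow> nat \<Rightarrow> 'a" where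
  "tface M r s = (if s < r then M s r else M r (Suc s))"

locale wcn = wcx X x for X :: "'a sset" and x :: 'a +
  fixes n :: nat
  assumes n1: "1 \<le> n"
begin

definition vc :: 'a where "vc = vconst X n x"

definition fcv :: "nat \<Rightarrow> 'a \<Rightarrow> 'a \<Rightarrow> 'a \<Rightarrow> nat \<Rightarrow> 'a" where
  "fcv j a b c i = (if i = j then a else if i = Suc j then b else if i = Suc (Suc j) then c else vc)"

definition Wit :: "nat \<Rightarrow> 'a \<Rightarrow> 'a \<Rightarrow> 'a \<Rightarrow> 'a \<Rightarrow> bool" where
  "Wit j h a b c \<longleftrightarrow> h \<in> Thin X (Suc n) \<and> (\<forall>i \<le> Suc n. fa n i h = fcv j a b c i)"

definition WitM :: "nat \<Rightarrow> 'a \<Rightarrow> (nat \<Rightarrow> nat \<Rightarrow> 'a) \<Rightarrow> nat \<Rightarrow> bool" where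
  "WitM j h M r \<longleftrightarrow> Wit j h (tface M r 0) (tface M r 1) (tface M r 2)"

lemma tetra:
  assumes j: "Suc j \<le> n" and k': "k' \<le> 3"
    and c0: "k' = 0 \<Longrightarrow> M 2 3 = vc" and c3: "k' = 3 \<Longrightarrow> M 0 1 = vc"
    and W: "\<And>r. r \<le> 3 \<Longrightarrow> r \<noteq> k' \<Longrightarrow> WitM j (\<Phi> r) M r"
  shows "\<exists>h. WitM j h M k'"
proof -
  define k where "k = j + k'"
  define y where "y i = (if j \<le> i \<and> i \<le> j + 3 then \<Phi> (i - j) else vconst X (Suc n) x)" for i
  define Y where "Y a b = (if j \<le> b \<and> b \<le> j + 3 \<and> j \<le> a \<and> a \<le> j + 2 then tface M (b - j) (a - j) else vc)" for a b
  have Wr: "\<Phi> r \<in> Thin X (Suc n)" "\<And>s. s \<le> Suc n \<Longrightarrow> fa n s (\<Phi> r) = fcv j (tface M r 0) (tface M r 1) (tface M r 2) s"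
    if "r \<le> 3" "r \<noteq> k'" for r
    using W[OF that] unfolding WitM_def Wit_def by auto
  have yface: "fa n a (y b) = Y a b" if "a \<le> Suc n" "b \<le> Suc (Suc n)" "b \<noteq> k" for a b
  proof (cases "j \<le> b \<and> b \<le> j + 3")
    case True
    then have "b - j \<le> 3" "b - j \<noteq> k'" using that k_def by auto
    then have "fa n a (y b) = fcv j (tface M (b - j) 0) (tface M (b - j) 1) (tface M (b - j) 2) a"
      using Wr(2)[of "b - j" a] that True y_def by simp
    then show ?thesis unfolding Y_def fcv_def vc_def using True
      by (auto simp: numeral_eq_Suc)
  next
    case False
    then show ?thesis unfolding Y_def y_def using fa_vconst vc_def by auto
  qed
  have ythin: "y i \<in> Thin X (Suc n)" if "i \<le> Suc (Suc n)" "i \<noteq> k" for i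
    using Wr(1)[of "i - j"] vconst_thin[of "Suc n"] that k_def k' unfolding y_def by auto
  have Ycompat: "Y i r = Y (r - 1) i" if "i < r" for i r
    using that unfolding Y_def tface_def by (auto simp: Suc_diff_Suc)
  obtain z where z: "z \<in> Thin X (Suc (Suc n))" "\<And>i. i \<le> Suc (Suc n) \<Longrightarrow> i \<noteq> k \<Longrightarrow> fa (Suc n) i z = y i"
    and zk: "(\<forall>i \<le> Suc (Suc n). i \<noteq> k \<longrightarrow> y i \<in> Thin X (Suc n)) \<longrightarrow> fa (Suc n) k z \<in> Thin X (Suc n)"
  proof -
    have "\<exists>z. z \<in> Thin X (Suc (Suc n)) \<and> (\<forall>i \<le> Suc (Suc n). i \<noteq> k \<longrightarrow> fa (Suc n) i z = y i)
     \<and> ((\<forall>i \<le> Suc (Suc n). i \<noteq> k \<longrightarrow> y i \<in> Thin X (Suc n)) \<longrightarrow> fa (Suc n) k z \<in> Thin X (Suc n))"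
    proof (rule horn_fill)
      show "k \<le> Suc (Suc n)" using j k' k_def by simp
    next
      fix i assume "i \<le> Suc (Suc n)" "i \<noteq> k" then show "y i \<in> Simp X (Suc n)" using ythin thin_simp by blast
    next
      fix i r assume "i < r" "r \<le> Suc (Suc n)" "i \<noteq> k" "r \<noteq> k"
      then show "fa n i (y r) = fa n (r - 1) (y i)" using yface Ycompat by simp
    next
      fix i m u assume i: "i \<le> Suc (Suc n)" "i \<noteq> k" "i \<notin> hornset k (Suc (Suc n))"
        and u: "dmor m (Suc n) u" and H: "hornset k (Suc (Suc n)) \<subseteq> (\<lambda>t. coface (Suc n) i (u t)) ` {0..m}"
      obtain a b where ab: "a \<noteq> b" "a \<in> hornset k (Suc (Suc n))" "b \<in> hornset k (Suc (Suc n))"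
        using hornset_two[of k "Suc (Suc n)"] j k' k_def by auto
      show "Act X m (Suc n) u (y i) \<in> Thin X m"
      proof (rule thin_check[OF ythin[OF i(1,2)] ab _ u H])
        fix s assume s: "s \<le> Suc n" "coface (Suc n) i s \<notin> hornset k (Suc (Suc n))"
        have "fa n s (y i) = Y s i" using yface s i by simp
        also have "\<dots> = vc"
        proof (cases "j \<le> i \<and> i \<le> j + 3 \<and> j \<le> s \<and> s \<le> j + 2")
          case False then show ?thesis unfolding Y_def by auto
        next
          case True
          define p where "p = s - j"
          define q where "q = i - j"
          define v where "v = (if p < q then p else Suc p)"
          have sp: "s = j + p" and iq: "i = j + q" using True p_def q_def by auto
          have Yv: "Y s i = tface M q p" unfolding Y_def using True p_def q_def by simp
          have cv: "coface (Suc n) i s = j + v" unfolding coface_def v_def using sp iq s(1) by auto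
          have hv: "\<not> (Suc v = k' \<or> v = k' \<or> v = Suc k')"
            using s(2) cv i(1) s(1) unfolding hornset_def k_def coface_def by (auto split: if_splits)
          have hq: "\<not> (Suc q = k' \<or> q = k' \<or> q = Suc k')"
            using i(3) iq i(1) unfolding hornset_def k_def by auto
          have vq: "v \<noteq> q" "v \<le> 3" "q \<le> 3" using True p_def q_def v_def by auto
          have D: "(k' = 0 \<and> v = 2 \<and> q = 3) \<or> (k' = 0 \<and> v = 3 \<and> q = 2) \<or> (k' = 3 \<and> v = 0 \<and> q = 1) \<or> (k' = 3 \<and> v = 1 \<and> q = 0)"
            using hv hq vq k' by presburger
          show ?thesis using D Yv v_def c0 c3 unfolding tface_def by (auto split: if_splits simp: numeral_eq_Suc)
        qed
        finally show "fa n s (y i) = vconst X n x" unfolding vc_def .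
      qed
    qed
    then show ?thesis using that by blast
  qed
  define h where "h = fa (Suc n) k z"
  have zs: "z \<in> Simp X (Suc (Suc n))" using thin_simp[OF z(1)] .
  have hthin: "h \<in> Thin X (Suc n)" using zk ythin unfolding h_def by blast
  have hface: "fa n s h = fcv j (tface M k' 0) (tface M k' 1) (tface M k' 2) s" if s: "s \<le> Suc n" for s
  proof (cases "s < k")
    case True
    have "fa n s h = fa n (k - 1) (fa (Suc n) s z)" unfolding h_def
      using fa_fa[OF True _ zs] j k' k_def by simp
    also have "\<dots> = Y (k - 1) s" using z(2)[of s] yface[of "k - 1" s] True s j k' k_def by simp
    also have "\<dots> = fcv j (tface M k' 0) (tface M k' 1) (tface M k' 2) s"
      using True k' unfolding Y_def fcv_def tface_def k_def by (auto simp: numeral_eq_Suc vc_def)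
    finally show ?thesis .
  next
    case False
    have "fa n k (fa (Suc n) (Suc s) z) = fa n s (fa (Suc n) k z)"
      using fa_fa[of k "Suc s" n z] zs False s by simp
    then have "fa n s h = fa n k (fa (Suc n) (Suc s) z)" unfolding h_def by simp
    also have "\<dots> = Y k (Suc s)" using z(2)[of "Suc s"] yface[of k "Suc s"] False s j k' k_def by simp
    also have "\<dots> = fcv j (tface M k' 0) (tface M k' 1) (tface M k' 2) s"
      using False k' unfolding Y_def fcv_def tface_def k_def by (auto simp: numeral_eq_Suc vc_def)
    finally show ?thesis .
  qed
  show ?thesis unfolding WitM_def Wit_def using hthin hface by blast
qed

end

definition mk6 :: "'a \<Rightarrow> 'a \<Rightarrow> 'a \<Rightarrow> 'a \<Rightarrow> 'a \<Rightarrow> 'a \<Rightarrow> nat \<Rightarrow> nat \<Rightarrow> 'a" where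
  "mk6 m01 m02 m03 m12 m13 m23 a b =
    (if a = 0 \<and> b = 1 then m01 else if a = 0 \<and> b = 2 then m02 else if a = 0 \<and> b = 3 then m03
     else if a = 1 \<and> b = 2 then m12 else if a = 1 \<and> b = 3 then m13 else m23)"

lemma tface_mk6:
  "tface (mk6 m01 m02 m03 m12 m13 m23) 0 0 = m01"
  "tface (mk6 m01 m02 m03 m12 m13 m23) 0 1 = m02"
  "tface (mk6 m01 m02 m03 m12 m13 m23) 0 2 = m03"
  "tface (mk6 m01 m02 m03 m12 m13 m23) 1 0 = m01"
  "tface (mk6 m01 m02 m03 m12 m13 m23) 1 1 = m12"
  "tface (mk6 m01 m02 m03 m12 m13 m23) 1 2 = m13"
  "tface (mk6 m01 m02 m03 m12 m13 m23) 2 0 = m02"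
  "tface (mk6 m01 m02 m03 m12 m13 m23) 2 1 = m12"
  "tface (mk6 m01 m02 m03 m12 m13 m23) 2 2 = m23"
  "tface (mk6 m01 m02 m03 m12 m13 m23) 3 0 = m03"
  "tface (mk6 m01 m02 m03 m12 m13 m23) 3 1 = m13"
  "tface (mk6 m01 m02 m03 m12 m13 m23) 3 2 = m23"
  unfolding tface_def mk6_def by (simp_all add: numeral_eq_Suc)

lemma mk6_01: "mk6 m01 m02 m03 m12 m13 m23 0 1 = m01" and mk6_23: "mk6 m01 m02 m03 m12 m13 m23 2 3 = m23"
  unfolding mk6_def by (simp_all add: numeral_eq_Suc)

context wcn
begin

lemma WitM_mk6:
  "WitM j h (mk6 m01 m02 m03 m12 m13 m23) 0 = Wit j h m01 m02 m03"
  "WitM j h (mk6 m01 m02 m03 m12 m13 m23) 1 = Wit j h m01 m12 m13"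
  "WitM j h (mk6 m01 m02 m03 m12 m13 m23) 2 = Wit j h m02 m12 m23"
  "WitM j h (mk6 m01 m02 m03 m12 m13 m23) 3 = Wit j h m03 m13 m23"
  unfolding WitM_def tface_mk6 by simp_all

lemma tetra4:
  assumes j: "Suc j \<le> n" and k': "k' \<le> 3"
    and c0: "k' = 0 \<Longrightarrow> m23 = vc" and c3: "k' = 3 \<Longrightarrow> m01 = vc"
    and W0: "k' \<noteq> 0 \<Longrightarrow> \<exists>h. Wit j h m01 m02 m03"
    and W1: "k' \<noteq> 1 \<Longrightarrow> \<exists>h. Wit j h m01 m12 m13"
    and W2: "k' \<noteq> 2 \<Longrightarrow> \<exists>h. Wit j h m02 m12 m23"
    and W3: "k' \<noteq> 3 \<Longrightarrow> \<exists>h. Wit j h m03 m13 m23"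
  shows "\<exists>h. WitM j h (mk6 m01 m02 m03 m12 m13 m23) k'"
proof -
  define M where "M = mk6 m01 m02 m03 m12 m13 m23"
  have "\<exists>\<Phi>. \<forall>r. r \<le> 3 \<longrightarrow> r \<noteq> k' \<longrightarrow> WitM j (\<Phi> r) M r"
  proof -
    have "\<forall>r. \<exists>h. r \<le> 3 \<longrightarrow> r \<noteq> k' \<longrightarrow> WitM j h M r"
    proof
      fix r
      show "\<exists>h. r \<le> 3 \<longrightarrow> r \<noteq> k' \<longrightarrow> WitM j h M r"
      proof (cases "r \<le> 3 \<and> r \<noteq> k'")
        case True
        then consider "r = 0" | "r = 1" | "r = 2" | "r = 3" by linarith
        then show ?thesis
        proof cases
          case 1
          then obtain h where "Wit j h m01 m02 m03" using W0 True by auto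
          then show ?thesis using 1 WitM_mk6(1)[of j h] unfolding M_def by blast
        next
          case 2
          then obtain h where "Wit j h m01 m12 m13" using W1 True by auto
          then show ?thesis using 2 WitM_mk6(2)[of j h] unfolding M_def by blast
        next
          case 3
          then obtain h where "Wit j h m02 m12 m23" using W2 True by auto
          then show ?thesis using 3 WitM_mk6(3)[of j h] unfolding M_def by blast
        next
          case 4
          then obtain h where "Wit j h m03 m13 m23" using W3 True by auto
          then show ?thesis using 4 WitM_mk6(4)[of j h] unfolding M_def by blast
        qed
      qed auto
    qed
    then show ?thesis by (rule choice)
  qed
  then obtain \<Phi> where "\<And>r. r \<le> 3 \<Longrightarrow> r \<noteq> k' \<Longrightarrow> WitM j (\<Phi> r) M r" by blast
  then have "\<exists>h. WitM j h M k'"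
  proof (intro tetra[OF j k', where \<Phi>=\<Phi>])
    show "M 2 3 = vc" if "k' = 0" using c0 that unfolding M_def mk6_23 .
    show "M 0 1 = vc" if "k' = 3" using c3 that unfolding M_def mk6_01 .
  qed
  then show ?thesis unfolding M_def .
qed

abbreviation bc :: "'a \<Rightarrow> bool" where "bc a \<equiv> bdry_const X n x a"

lemma bc_iff:
  assumes a: "a \<in> Simp X (Suc K)"
  shows "bdry_const X (Suc K) x a \<longleftrightarrow> (\<forall>s \<le> Suc K. fa K s a = vconst X K x)"
proof
  assume "bdry_const X (Suc K) x a"
  then show "\<forall>s \<le> Suc K. fa K s a = vconst X K x"
  proof (intro allI impI)
    fix s assume s: "s \<le> Suc K"
    have "s \<notin> coface K s ` {0..K}" by (auto simp: coface_def)
    then have "coface K s ` {0..K} \<noteq> {0..Suc K}" using s by auto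
    then have "coface K s \<in> Simp (bdry (Suc K)) K" unfolding bdry_def using dmor_coface by simp
    then show "fa K s a = vconst X K x" using \<open>bdry_const X (Suc K) x a\<close>
      unfolding bdry_const_def fa_def by blast
  qed
next
  assume F: "\<forall>s \<le> Suc K. fa K s a = vconst X K x"
  show "bdry_const X (Suc K) x a"
    unfolding bdry_const_def
  proof (intro conjI allI impI a)
    fix m g assume "g \<in> Simp (bdry (Suc K)) m"
    then have g: "dmor m (Suc K) g" and ng: "g ` {0..m} \<noteq> {0..Suc K}" unfolding bdry_def by auto
    have "g ` {0..m} \<subseteq> {0..Suc K}" using dmor_le[OF g] by auto
    have "\<exists>s. s \<le> Suc K \<and> s \<notin> g ` {0..m}"
    proof (rule ccontr)
      assume "\<not> ?thesis"
      then have "{0..Suc K} \<subseteq> g ` {0..m}" by auto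
      with \<open>g ` {0..m} \<subseteq> {0..Suc K}\<close> have "g ` {0..m} = {0..Suc K}" by auto
      with ng show False ..
    qed
    then obtain s where s: "s \<le> Suc K" "s \<notin> g ` {0..m}" by blast
    show "Act X m (Suc K) g a = vconst X m x"
      using act_rm[OF a g s] F s act_vconst[OF rm_dmor[OF g s]] by simp
  qed
qed

lemma n_suc: "n = Suc (n - 1)" using n1 by simp

lemma bc_faces: assumes "bc a" "s \<le> n" shows "fa (n - 1) s a = vconst X (n - 1) x"
proof -
  obtain K where K: "n = Suc K" using n1 by (cases n) auto
  have a: "a \<in> Simp X (Suc K)" using assms(1) K unfolding bdry_const_def by simp
  have "bdry_const X (Suc K) x a" using assms(1) K by simp
  then show ?thesis using bc_iff[OF a] assms(2) K by simp
qed

lemma bc_simp: "bc a \<Longrightarrow> a \<in> Simp X n" unfolding bdry_const_def by simp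

lemma vc_simp: "vc \<in> Simp X n" unfolding vc_def by (rule vconst_simp)

lemma Wit_simp: "Wit j h a b c \<Longrightarrow> h \<in> Simp X (Suc n)" unfolding Wit_def using thin_simp by blast

lemma fcv_shift: "fcv j vc c d = fcv (Suc j) c d vc"
  unfolding fcv_def by (rule ext) simp

lemma shift: "Wit j h vc c d = Wit (Suc j) h c d vc"
  unfolding Wit_def fcv_shift by (rule refl)

lemma refl_wit:
  assumes c: "bc c" and j: "j \<le> n"
  shows "\<exists>h. Wit j h c c vc"
proof -
  define h where "h = Act X (Suc n) n (codeg (Suc n) j) c"
  have d: "dmor (Suc n) n (codeg (Suc n) j)" by (rule dmor_codeg[OF j])
  have cs: "c \<in> Simp X n" using bc_simp[OF c] .
  have "h \<in> Thin X (Suc n)" unfolding h_def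
    by (rule noninj_thin[OF d, of j]) (use j cs in \<open>auto simp: codeg_def\<close>)
  moreover have "fa n i h = fcv j c c vc i" if i: "i \<le> Suc n" for i
  proof -
    have dd: "dmor n n (dcomp n (codeg (Suc n) j) (coface n i))" by (rule dmor_dcomp[OF dmor_coface d])
    have fh: "fa n i h = Act X n n (dcomp n (codeg (Suc n) j) (coface n i)) c"
      unfolding fa_def h_def using act_comp[OF dmor_coface d cs] by simp
    define w where "w = dcomp n (codeg (Suc n) j) (coface n i)"
    have wv: "w t = (if t \<le> n then (if t < i then (if t \<le> j then t else t - 1) else (if Suc t \<le> j then Suc t else t)) else 0)" for t
      unfolding w_def dcomp_def codeg_def coface_def by simp
    consider "i = j" | "i = Suc j" | "i < j" | "i > Suc j" by linarith
    then show ?thesis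
    proof cases
      case 1
      have "w = didx n" by (rule ext) (simp add: wv didx_def 1)
      then show ?thesis using fh act_id[OF cs] 1 unfolding fcv_def w_def by simp
    next
      case 2
      have "w = didx n" by (rule ext) (simp add: wv didx_def 2)
      then show ?thesis using fh act_id[OF cs] 2 unfolding fcv_def w_def by simp
    next
      case 3
      have wi: "w t \<noteq> i" if "t \<le> n" for t using 3 that by (simp add: wv)
      have "i \<notin> w ` {0..n}"
      proof
        assume "i \<in> w ` {0..n}"
        then obtain t where "t \<le> n" "i = w t" by auto
        then show False using wi by metis
      qed
      moreover have "i \<le> n" using 3 j by simp
      ultimately have "w \<in> Simp (bdry n) n"
        unfolding bdry_def using dd w_def by auto
      then have "fa n i h = vc" using c fh unfolding bdry_const_def vc_def w_def by auto
      then show ?thesis using 3 unfolding fcv_def by auto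
    next
      case 4
      have wi: "w t \<noteq> i - 1" if "t \<le> n" for t using 4 that by (simp add: wv) arith
      have "i - 1 \<notin> w ` {0..n}"
      proof
        assume "i - 1 \<in> w ` {0..n}"
        then obtain t where "t \<le> n" "i - 1 = w t" by auto
        then show False using wi by metis
      qed
      moreover have "i - 1 \<le> n" using 4 i by simp
      ultimately have "w \<in> Simp (bdry n) n"
        unfolding bdry_def using dd w_def by auto
      then have "fa n i h = vc" using c fh unfolding bdry_const_def vc_def w_def by auto
      then show ?thesis using 4 unfolding fcv_def by auto
    qed
  qed
  ultimately show ?thesis unfolding Wit_def by blast
qed

end

context wcn
begin

definition Pr :: "nat \<Rightarrow> 'a \<Rightarrow> 'a \<Rightarrow> bool" where
  "Pr j a b \<longleftrightarrow> bc a \<and> bc b \<and> (\<exists>h. Wit j h a b vc)"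

lemma refl_R: "bc c \<Longrightarrow> Suc j \<le> n \<Longrightarrow> \<exists>h. Wit j h vc c c"
  using refl_wit[of c "Suc j"] shift by simp

lemma mv_a:
  assumes j: "Suc j \<le> n" and c: "bc c" and d: "bc d" and W: "\<exists>h. Wit j h c d vc"
  shows "\<exists>h. Wit j h vc d c"
proof -
  have "\<exists>h. WitM j h (mk6 vc c c d c vc) 1"
    by (rule tetra4[OF j]) (use refl_R[OF c j] W refl_wit[OF c] j in auto)
  then show ?thesis unfolding WitM_mk6 .
qed

lemma mv_b:
  assumes j: "Suc j \<le> n" and c: "bc c" and d: "bc d" and W: "\<exists>h. Wit j h vc c d"
  shows "\<exists>h. Wit j h c d vc"
proof -
  have "\<exists>h. WitM j h (mk6 vc c d d d vc) 2"
    by (rule tetra4[OF j]) (use refl_R[OF d j] W refl_wit[OF d] j in auto)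
  then show ?thesis unfolding WitM_mk6 .
qed

lemma mv_c:
  assumes j: "Suc j \<le> n" and c: "bc c" and W1: "\<exists>h. Wit j h vc c d" and W2: "\<exists>h. Wit j h vc c e"
  shows "\<exists>h. Wit j h d e vc"
proof -
  have "\<exists>h. WitM j h (mk6 vc c d c e vc) 3"
    by (rule tetra4[OF j]) (use W1 W2 refl_wit[OF c] j in auto)
  then show ?thesis unfolding WitM_mk6 .
qed

lemma mv_d:
  assumes j: "Suc j \<le> n" and W0: "\<exists>h. Wit j h vc a' a" and W2: "\<exists>h. Wit j h a' b' c"
    and W3: "\<exists>h. Wit j h a b c"
  shows "\<exists>h. Wit j h vc b' b"
proof -
  have "\<exists>h. WitM j h (mk6 vc a' a b' b c) 1"
    by (rule tetra4[OF j]) (use W0 W2 W3 in auto)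
  then show ?thesis unfolding WitM_mk6 .
qed

lemma mv_e:
  assumes j: "Suc j \<le> n" and W0: "\<exists>h. Wit j h a b c" and W1: "\<exists>h. Wit j h a b' c'"
    and W3: "\<exists>h. Wit j h c c' vc"
  shows "\<exists>h. Wit j h b b' vc"
proof -
  have "\<exists>h. WitM j h (mk6 a b c b' c' vc) 2"
    by (rule tetra4[OF j]) (use W0 W1 W3 in auto)
  then show ?thesis unfolding WitM_mk6 .
qed

lemma Pr_refl: "bc a \<Longrightarrow> j \<le> n \<Longrightarrow> Pr j a a"
  unfolding Pr_def using refl_wit by blast

lemma Pr_suc: "Pr (Suc j) a b \<longleftrightarrow> bc a \<and> bc b \<and> (\<exists>h. Wit j h vc a b)"
  unfolding Pr_def shift ..

lemma Pr_sym_lo: "Suc j \<le> n \<Longrightarrow> Pr j a b \<Longrightarrow> Pr j b a"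
  unfolding Pr_def using mv_a mv_b by blast

lemma Pr_up: "Suc j \<le> n \<Longrightarrow> Pr j a b \<Longrightarrow> Pr (Suc j) a b"
proof -
  assume j: "Suc j \<le> n" and P: "Pr j a b"
  then have "Pr j b a" by (rule Pr_sym_lo)
  then show "Pr (Suc j) a b" unfolding Pr_suc using mv_a[OF j] unfolding Pr_def by blast
qed

lemma Pr_down: "Suc j \<le> n \<Longrightarrow> Pr (Suc j) a b \<Longrightarrow> Pr j a b"
  unfolding Pr_suc using mv_b unfolding Pr_def by blast

lemma Pr_top_sym: "Pr n a b \<Longrightarrow> Pr n b a"
proof -
  assume P: "Pr n a b"
  obtain j where j: "n = Suc j" using n1 by (cases n) auto
  have "Pr j a b" using Pr_down[of j a b] P j by simp
  then have "Pr j b a" using Pr_sym_lo j by simp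
  then show "Pr n b a" using Pr_up[of j b a] j by simp
qed

lemma Pr_top_trans: "Pr n a b \<Longrightarrow> Pr n b c \<Longrightarrow> Pr n a c"
proof -
  assume P1: "Pr n a b" and P2: "Pr n b c"
  obtain j where j: "n = Suc j" using n1 by (cases n) auto
  have Q1: "Pr (Suc j) b a" using Pr_top_sym[OF P1] j by simp
  have Q2: "Pr (Suc j) b c" using P2 j by simp
  have "\<exists>h. Wit j h a c vc" using mv_c[of j b a c] Q1 Q2 j unfolding Pr_suc by auto
  then have "Pr j a c" using Q1 Q2 unfolding Pr_def Pr_suc by auto
  then show "Pr n a c" using Pr_up[of j a c] j by simp
qed

lemma Pr_to_top: "j \<le> n \<Longrightarrow> Pr j a b \<Longrightarrow> Pr n a b"
proof (induction "n - j" arbitrary: j)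
  case 0 then show ?case by simp
next
  case (Suc d)
  then have "Pr (Suc j) a b" using Pr_up by simp
  moreover have "d = n - Suc j" "Suc j \<le> n" using Suc.hyps(2) by auto
  ultimately show ?case using Suc.hyps(1) by blast
qed

lemma Pr_from_top: "j \<le> n \<Longrightarrow> Pr n a b \<Longrightarrow> Pr j a b"
proof (induction "n - j" arbitrary: j)
  case 0 then show ?case by simp
next
  case (Suc d)
  then have "Pr (Suc j) a b" by simp
  then show ?case using Suc Pr_down by simp
qed

end

lemma cc_id: "j \<le> n \<Longrightarrow> i = j \<or> i = Suc j \<Longrightarrow> dcomp n (codeg (Suc n) j) (coface n i) = didx n"
  unfolding dcomp_def codeg_def coface_def didx_def by (rule ext) auto

lemma cc_val: "dcomp n (codeg (Suc n) j) (coface n i) t =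
   (if t \<le> n then (if t < i then (if t \<le> j then t else t - 1) else (if Suc t \<le> j then Suc t else t)) else 0)"
  unfolding dcomp_def codeg_def coface_def by simp

lemma cc_bdry:
  assumes j: "j \<le> n" and i: "i \<le> Suc n" "i \<noteq> j" "i \<noteq> Suc j"
  shows "dcomp n (codeg (Suc n) j) (coface n i) \<in> Simp (bdry n) n"
proof -
  define w where "w = dcomp n (codeg (Suc n) j) (coface n i)"
  have dd: "dmor n n w" unfolding w_def
    by (rule dmor_dcomp[OF dmor_coface dmor_codeg[OF j]])
  obtain v where v: "v \<le> n" "\<And>t. t \<le> n \<Longrightarrow> w t \<noteq> v"
  proof (cases "i < j")
    case True
    show ?thesis
      by (rule that[of i]) (use True j in \<open>auto simp: w_def cc_val\<close>)
  next
    case False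
    then have "i > Suc j" using i by simp
    show ?thesis
      by (rule that[of "i - 1"]) (use \<open>i > Suc j\<close> i in \<open>auto simp: w_def cc_val\<close>)
  qed
  have "v \<notin> w ` {0..n}"
  proof
    assume "v \<in> w ` {0..n}"
    then obtain t where "t \<le> n" "v = w t" by auto
    then show False using v(2) by metis
  qed
  then have "w ` {0..n} \<noteq> {0..n}" using v(1) by auto
  then show ?thesis unfolding bdry_def w_def[symmetric] using dd by simp
qed

context wcn
begin

lemma ymap_smap:
  assumes A: "A \<in> Simp X n"
  shows "smap (Delta n) X (ymap X n A)"
  unfolding smap_def ymap_def
proof (intro conjI allI impI)
  fix m a assume "a \<in> Simp (Delta n) m"
  then show "Act X m n a A \<in> Simp X m" using act_simp A unfolding Delta_def strat_delta_def by simp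
next
  fix l m g a assume "dmor l m g" "a \<in> Simp (Delta n) m"
  then show "Act X l n (Act (Delta n) l m g a) A = Act X l m g (Act X m n a A)"
    using act_comp A unfolding Delta_def strat_delta_def by simp
next
  fix m a assume "a \<in> Thin (Delta n) m"
  then have "a \<in> dgn n m" "dmor m n a" unfolding Delta_def strat_delta_def dgn_def degenerate_def by auto
  then show "Act X m n a A \<in> Thin X m" using dgn_noninj noninj_thin A by blast
qed

lemma destruct:
  assumes S: "shtpy X n A B" and bA: "bc A" and bB: "bc B"
  shows "\<exists>e. e 0 = B \<and> e (Suc n) = A \<and> (\<forall>j \<le> n. Pr j (e j) (e (Suc j)))"
proof -
  obtain H where H: "smap (sprod (Delta n) (Delta_t 1)) X H"
    and H01: "\<And>m a. a \<in> Simp (Delta n) m \<Longrightarrow> H m (a, const0 m) = ymap X n A m a \<and> H m (a, const1 m) = ymap X n B m a"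
    and Hb: "\<And>m b t. b \<in> Simp (bdry n) m \<Longrightarrow> t \<in> Simp (Delta_t 1) m \<Longrightarrow> H m (b, t) = ymap X n A m b"
    using S unfolding shtpy_def htpy_def by blast
  have Hs: "H m (a, t) \<in> Simp X m" if "dmor m n a" "dmor m 1 t" for m a t
    using H that unfolding smap_def sprod_def Delta_def Delta_t_def strat_delta_def by auto
  have Hn: "H l (dcomp l a g, dcomp l t g) = Act X l m g (H m (a, t))" if "dmor l m g" "dmor m n a" "dmor m 1 t" for l m g a t
    using H that unfolding smap_def sprod_def Delta_def Delta_t_def strat_delta_def by auto
  have Ht: "H m (a, t) \<in> Thin X m" if "a \<in> Thin (Delta n) m" "t \<in> Thin (Delta_t 1) m" for m a t
    using H that unfolding smap_def sprod_def by auto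
  have As: "A \<in> Simp X n" "B \<in> Simp X n" using bA bB bc_simp by auto
  define dj where "dj j = (\<lambda>t. if t \<le> n then (if t < j then 0 else 1) else (0::nat))" for j
  define tj where "tj j = (\<lambda>t. if t \<le> Suc n then (if t \<le> j then 0 else 1) else (0::nat))" for j
  define e where "e j = H n (didx n, dj j)" for j
  define hh where "hh j = H (Suc n) (codeg (Suc n) j, tj j)" for j
  have ddj: "dmor n 1 (dj j)" for j unfolding dmor_def dj_def by auto
  have dtj: "dmor (Suc n) 1 (tj j)" for j unfolding dmor_def tj_def by auto
  have e0: "e 0 = B"
  proof -
    have "dj 0 = const1 n" unfolding dj_def const1_def by auto
    then have "e 0 = ymap X n B n (didx n)" using H01[of "didx n" n] dmor_didx unfolding e_def Delta_def strat_delta_def by simp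
    then show ?thesis unfolding ymap_def using act_id As by simp
  qed
  have eN: "e (Suc n) = A"
  proof -
    have "dj (Suc n) = const0 n" unfolding dj_def const0_def by auto
    then have "e (Suc n) = ymap X n A n (didx n)" using H01[of "didx n" n] dmor_didx unfolding e_def Delta_def strat_delta_def by simp
    then show ?thesis unfolding ymap_def using act_id As by simp
  qed
  have ebc: "bc (e j)" for j
    unfolding bdry_const_def
  proof (intro conjI allI impI)
    show "e j \<in> Simp X n" unfolding e_def by (rule Hs[OF dmor_didx ddj])
  next
    fix m g assume g: "g \<in> Simp (bdry n) m"
    then have gd: "dmor m n g" unfolding bdry_def by simp
    have "Act X m n g (e j) = H m (dcomp m (didx n) g, dcomp m (dj j) g)"
      unfolding e_def using Hn[OF gd dmor_didx ddj] by simp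
    also have "\<dots> = H m (g, dcomp m (dj j) g)" using dcomp_didx_left[OF gd] by simp
    also have "\<dots> = ymap X n A m g" by (rule Hb[OF g]) (use dmor_dcomp[OF gd ddj] in \<open>simp add: Delta_t_def strat_delta_def\<close>)
    also have "\<dots> = vconst X m x" using bA g unfolding bdry_const_def ymap_def by simp
    finally show "Act X m n g (e j) = vconst X m x" .
  qed
  have Pj: "Pr j (e j) (e (Suc j))" if j: "j \<le> n" for j
  proof -
    have thin: "hh j \<in> Thin X (Suc n)" unfolding hh_def
    proof (rule Ht)
      show "codeg (Suc n) j \<in> Thin (Delta n) (Suc n)"
        unfolding Delta_def strat_delta_def dgn_def degenerate_def
        using dmor_codeg[OF j] dcomp_didx_left[OF dmor_codeg[OF j]] dmor_didx[of n] by fastforce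
      have "1 < Suc n" using n1 by simp
      then show "tj j \<in> Thin (Delta_t 1) (Suc n)"
        unfolding Delta_t_def strat_delta_def dgn_def degenerate_def
        using dtj[of j] dcomp_didx_left[OF dtj[of j]] dmor_didx[of 1] by fastforce
    qed
    have face: "fa n i (hh j) = fcv j (e j) (e (Suc j)) vc i" if i: "i \<le> Suc n" for i
    proof -
      have "fa n i (hh j) = H n (dcomp n (codeg (Suc n) j) (coface n i), dcomp n (tj j) (coface n i))"
        unfolding fa_def hh_def using Hn[OF dmor_coface dmor_codeg[OF j] dtj] by simp
      moreover have "dcomp n (tj j) (coface n j) = dj j"
        unfolding dcomp_def tj_def coface_def dj_def by (rule ext) auto
      moreover have "dcomp n (tj j) (coface n (Suc j)) = dj (Suc j)"
        unfolding dcomp_def tj_def coface_def dj_def by (rule ext) auto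
      moreover have "H n (dcomp n (codeg (Suc n) j) (coface n i), dcomp n (tj j) (coface n i)) = vc"
        if "i \<noteq> j" "i \<noteq> Suc j"
      proof -
        have b: "dcomp n (codeg (Suc n) j) (coface n i) \<in> Simp (bdry n) n" by (rule cc_bdry[OF j i that])
        have "H n (dcomp n (codeg (Suc n) j) (coface n i), dcomp n (tj j) (coface n i)) = ymap X n A n (dcomp n (codeg (Suc n) j) (coface n i))"
          by (rule Hb[OF b]) (use dmor_dcomp[OF dmor_coface dtj] in \<open>simp add: Delta_t_def strat_delta_def\<close>)
        then show ?thesis using bA b unfolding bdry_const_def ymap_def vc_def by simp
      qed
      ultimately show ?thesis using cc_id[OF j] unfolding fcv_def e_def by auto
    qed
    show ?thesis unfolding Pr_def Wit_def using ebc thin face by blast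
  qed
  show ?thesis using e0 eN Pj by blast
qed

end

context wcx
begin

lemma thin_check2:
  assumes y: "y \<in> Thin X (Suc K)" and ab: "a \<noteq> b" "a \<in> H" "b \<in> H"
    and fc: "\<And>s. s \<le> Suc K \<Longrightarrow> s \<notin> H \<Longrightarrow> fa K s y = vconst X K x"
    and u: "dmor m (Suc K) u" and HH: "H \<subseteq> u ` {0..m}"
  shows "Act X m (Suc K) u y \<in> Thin X m"
proof -
  have ys: "y \<in> Simp X (Suc K)" using thin_simp[OF y] .
  have "a \<in> u ` {0..m}" "b \<in> u ` {0..m}" using ab HH by auto
  then have m1: "1 \<le> m" by (rule two_dim[OF ab(1)])
  consider "\<exists>i<m. u i = u (Suc i)" | "\<forall>i<m. u i < u (Suc i)" using noninj_or_smono[OF u] by blast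
  then show ?thesis
  proof cases
    case 1 then show ?thesis using noninj_thin[OF u _ _ ys] by blast
  next
    case 2
    show ?thesis
    proof (cases "\<forall>v\<le>Suc K. v \<in> u ` {0..m}")
      case True
      then have "m = Suc K \<and> u = didx (Suc K)" using smono_surj_id[OF u] 2 by blast
      then show ?thesis using act_id[OF ys] y by simp
    next
      case False
      then obtain s where s: "s \<le> Suc K" "s \<notin> u ` {0..m}" by blast
      have "s \<notin> H" using s HH by blast
      then have "fa K s y = vconst X K x" using fc s by blast
      then have "Act X m (Suc K) u y = vconst X m x"
        using act_rm[OF ys u s] act_vconst[OF rm_dmor[OF u s]] by simp
      then show ?thesis using vconst_thin[OF m1] by simp
    qed
  qed
qed

end

definition fits :: "nat \<Rightarrow> nat \<Rightarrow> (nat \<Rightarrow> nat) \<Rightarrow> (nat \<Rightarrow> nat) \<Rightarrow> nat \<Rightarrow> bool" where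
  "fits n m a t j \<longleftrightarrow> j \<le> n \<and> (\<forall>i \<le> m. (t i = 0 \<longrightarrow> a i \<le> j) \<and> (t i \<noteq> 0 \<longrightarrow> j \<le> a i))"

definition JJ :: "nat \<Rightarrow> (nat \<Rightarrow> nat) \<Rightarrow> (nat \<Rightarrow> nat) \<Rightarrow> nat" where
  "JJ m a t = Max (insert 0 (a ` {i. i \<le> m \<and> t i = 0}))"

definition uu :: "(nat \<Rightarrow> nat) \<Rightarrow> (nat \<Rightarrow> nat) \<Rightarrow> nat \<Rightarrow> nat" where
  "uu a t = (\<lambda>i. a i + t i)"

lemma JJ_fits:
  assumes a: "dmor m n a" and t: "dmor m 1 t"
  shows "fits n m a t (JJ m a t)"
proof -
  define S where "S = insert 0 (a ` {i. i \<le> m \<and> t i = 0})"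
  have fS: "finite S" unfolding S_def by simp
  have J: "JJ m a t = Max S" unfolding JJ_def S_def ..
  have Sle: "s \<le> n" if "s \<in> S" for s using that dmor_le[OF a] unfolding S_def by auto
  have "Max S \<in> S" by (rule Max_in[OF fS]) (simp add: S_def)
  then have Jn: "JJ m a t \<le> n" using Sle J by simp
  have c1: "a i \<le> JJ m a t" if "i \<le> m" "t i = 0" for i
    using that fS J unfolding S_def by (simp add: Max_ge_iff)
  have c2: "JJ m a t \<le> a i" if i: "i \<le> m" "t i \<noteq> 0" for i
  proof -
    have "Max S \<in> S" by (rule Max_in[OF fS]) (simp add: S_def)
    then consider "Max S = 0" | i' where "i' \<le> m" "t i' = 0" "Max S = a i'" unfolding S_def by auto
    then show ?thesis
    proof cases
      case 1 then show ?thesis using J by simp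
    next
      case 2
      have "i' < i"
      proof (rule ccontr)
        assume "\<not> i' < i"
        then have "t i \<le> t i'" using dmor_mono[OF t, of i i'] 2 by simp
        then show False using 2 i by simp
      qed
      then have "a i' \<le> a i" using dmor_mono[OF a, of i' i] i by simp
      then show ?thesis using 2 J by simp
    qed
  qed
  show ?thesis unfolding fits_def using Jn c1 c2 by blast
qed

lemma dmor_uu: assumes a: "dmor m n a" and t: "dmor m 1 t" shows "dmor m (Suc n) (uu a t)"
  unfolding dmor_def uu_def
proof (intro conjI allI impI)
  fix i assume "i \<le> m" then show "a i + t i \<le> Suc n" using dmor_le[OF a] dmor_le[OF t] by fastforce
next
  fix i j assume "i \<le> j" "j \<le> m" then show "a i + t i \<le> a j + t j" using dmor_mono[OF a] dmor_mono[OF t] add_mono by blast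
next
  fix i assume "m < i" then show "a i + t i = 0" using dmor_zero[OF a] dmor_zero[OF t] by simp
qed

lemma fits_comp: "fits n m a t j \<Longrightarrow> dmor l m g \<Longrightarrow> fits n l (dcomp l a g) (dcomp l t g) j"
  unfolding fits_def dcomp_def using dmor_le by fastforce

lemma uu_comp: "uu (dcomp l a g) (dcomp l t g) = dcomp l (uu a t) g"
  unfolding uu_def dcomp_def by (rule ext) auto

lemma t01: "dmor m 1 t \<Longrightarrow> i \<le> m \<Longrightarrow> t i \<noteq> 0 \<Longrightarrow> t i = 1"
  using dmor_le[of m 1 t i] by simp

context wcn
begin

lemma miss_vc:
  assumes h: "h \<in> Simp X (Suc n)" and u: "dmor m (Suc n) u" and s: "s \<le> Suc n" "s \<notin> u ` {0..m}"
    and f: "fa n s h = vc"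
  shows "Act X m (Suc n) u h = vconst X m x"
  using act_rm[OF h u s] act_vconst[OF rm_dmor[OF u s]] f unfolding vc_def by simp

lemma miss2:
  assumes h: "h \<in> Simp X (Suc n)" and u: "dmor m (Suc n) u" and s: "s \<le> n" "s \<notin> u ` {0..m}" "Suc s \<notin> u ` {0..m}"
    and f: "bc (fa n s h)"
  shows "Act X m (Suc n) u h = vconst X m x"
proof -
  have s': "s \<le> Suc n" using s by simp
  have d: "dmor m n (rm s u)" by (rule rm_dmor[OF u s' s(2)])
  have "s \<notin> rm s u ` {0..m}"
  proof
    assume "s \<in> rm s u ` {0..m}"
    then obtain t where t: "t \<le> m" "rm s u t = s" by auto
    have "u t \<in> u ` {0..m}" using t by auto
    then have "u t \<noteq> s" "u t \<noteq> Suc s" using s by metis+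
    then show False using t unfolding rm_def by (auto split: if_splits)
  qed
  then have "rm s u ` {0..m} \<noteq> {0..n}" using s by auto
  then have "rm s u \<in> Simp (bdry n) m" unfolding bdry_def using d by simp
  then show ?thesis using act_rm[OF h u s' s(2)] f unfolding bdry_const_def by simp
qed

end

context wcn
begin

lemma sprod_simp: "p \<in> Simp (sprod (Delta n) (Delta_t 1)) m \<longleftrightarrow> dmor m n (fst p) \<and> dmor m 1 (snd p)"
  unfolding sprod_def Delta_def Delta_t_def strat_delta_def by (cases p) simp

lemma sprod_act: "Act (sprod (Delta n) (Delta_t 1)) l m g p = (dcomp l (fst p) g, dcomp l (snd p) g)"
  unfolding sprod_def Delta_def Delta_t_def strat_delta_def by simp

lemma dgn_dmor: "a \<in> dgn N m \<Longrightarrow> dmor m N a"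
  unfolding dgn_def degenerate_def strat_delta_def by simp

lemma sprod_thin: assumes "p \<in> Thin (sprod (Delta n) (Delta_t 1)) m"
  shows "fst p \<in> dgn n m \<and> dmor m n (fst p) \<and> dmor m 1 (snd p)"
proof -
  have A: "fst p \<in> Thin (Delta n) m" and B: "snd p \<in> Thin (Delta_t 1) m"
    using assms unfolding sprod_def by (cases p; simp)+
  have "fst p \<in> dgn n m" using A unfolding Delta_def strat_delta_def by simp
  moreover have "dmor m 1 (snd p)"
  proof -
    have "snd p \<in> dgn 1 m \<or> (m = 1 \<and> snd p = didx 1)" using B unfolding Delta_t_def strat_delta_def
      by (auto split: if_splits)
    then show ?thesis using dgn_dmor dmor_didx by auto
  qed
  ultimately show ?thesis using dgn_dmor by blast
qed

lemma construct:
  assumes bA: "bc A" and bB: "bc B" and e0: "e 0 = B" and eN: "e (Suc n) = A"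
    and P: "\<forall>j \<le> n. Pr j (e j) (e (Suc j))"
  shows "shtpy X n A B"
proof -
  have "\<forall>j. \<exists>hj. j \<le> n \<longrightarrow> Wit j hj (e j) (e (Suc j)) vc" using P unfolding Pr_def by blast
  then obtain h where h: "\<forall>j. j \<le> n \<longrightarrow> Wit j (h j) (e j) (e (Suc j)) vc" using choice by metis
  have ebc: "bc (e j)" if "j \<le> Suc n" for j
  proof (cases "j = Suc n")
    case True then show ?thesis using eN bA by simp
  next
    case False then show ?thesis using P that unfolding Pr_def by simp
  qed
  have hthin: "h j \<in> Thin X (Suc n)" if "j \<le> n" for j using h that unfolding Wit_def by blast
  have hs: "h j \<in> Simp X (Suc n)" if "j \<le> n" for j using thin_simp[OF hthin[OF that]] .
  have hface: "fa n i (h j) = fcv j (e j) (e (Suc j)) vc i" if "j \<le> n" "i \<le> Suc n" for i j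
    using h that unfolding Wit_def by blast
  have adj: "Act X m (Suc n) (uu a t) (h j) = Act X m (Suc n) (uu a t) (h (Suc j))"
    if a: "dmor m n a" and t: "dmor m 1 t" and f1: "fits n m a t j" and f2: "fits n m a t (Suc j)" for m a t j
  proof -
    have u: "dmor m (Suc n) (uu a t)" by (rule dmor_uu[OF a t])
    have j: "Suc j \<le> n" using f2 unfolding fits_def by simp
    have miss: "Suc j \<notin> uu a t ` {0..m}"
    proof
      assume "Suc j \<in> uu a t ` {0..m}"
      then obtain i where i: "i \<le> m" "a i + t i = Suc j" unfolding uu_def by auto
      show False
      proof (cases "t i = 0")
        case True then show ?thesis using f1 i unfolding fits_def by fastforce
      next
        case False
        then have "t i = 1" using t01[OF t i(1)] by simp
        then show ?thesis using f2 i False unfolding fits_def by fastforce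
      qed
    qed
    have sj: "Suc j \<le> Suc n" using j by simp
    have "Act X m (Suc n) (uu a t) (h j) = Act X m n (rm (Suc j) (uu a t)) (fa n (Suc j) (h j))"
      by (rule act_rm[OF hs u sj miss]) (use j in simp)
    also have "fa n (Suc j) (h j) = e (Suc j)" using hface[of j "Suc j"] j unfolding fcv_def by simp
    also have "e (Suc j) = fa n (Suc j) (h (Suc j))" using hface[of "Suc j" "Suc j"] j unfolding fcv_def by simp
    also have "Act X m n (rm (Suc j) (uu a t)) (fa n (Suc j) (h (Suc j))) = Act X m (Suc n) (uu a t) (h (Suc j))"
      by (rule act_rm[OF hs u sj miss, symmetric]) (use j in simp)
    finally show ?thesis .
  qed
  have fits_mid: "fits n m a t j''" if "fits n m a t j" "fits n m a t j'" "j \<le> j''" "j'' \<le> j'" for m a t j j' j''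
    using that unfolding fits_def by (meson le_trans)
  have agree_le: "Act X m (Suc n) (uu a t) (h j) = Act X m (Suc n) (uu a t) (h j')"
    if a: "dmor m n a" and t: "dmor m 1 t" and f: "fits n m a t j" "fits n m a t j'" and le: "j \<le> j'" for m a t j j'
  proof -
    have "\<forall>d. j + d \<le> j' \<longrightarrow> Act X m (Suc n) (uu a t) (h j) = Act X m (Suc n) (uu a t) (h (j + d))"
    proof
      fix d show "j + d \<le> j' \<longrightarrow> Act X m (Suc n) (uu a t) (h j) = Act X m (Suc n) (uu a t) (h (j + d))"
      proof (induction d)
        case 0 then show ?case by simp
      next
        case (Suc d)
        show ?case
        proof
          assume le2: "j + Suc d \<le> j'"
          have "fits n m a t (j + d)" by (rule fits_mid[OF f]) (use le2 in auto)
          moreover have "fits n m a t (Suc (j + d))" by (rule fits_mid[OF f]) (use le2 in auto)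
          ultimately have "Act X m (Suc n) (uu a t) (h (j + d)) = Act X m (Suc n) (uu a t) (h (Suc (j + d)))"
            using adj[OF a t] by blast
          then show "Act X m (Suc n) (uu a t) (h j) = Act X m (Suc n) (uu a t) (h (j + Suc d))"
            using Suc.IH le2 by simp
        qed
      qed
    qed
    then have "j + (j' - j) \<le> j' \<longrightarrow> Act X m (Suc n) (uu a t) (h j) = Act X m (Suc n) (uu a t) (h (j + (j' - j)))" by blast
    then show ?thesis using le by simp
  qed
  have agree: "Act X m (Suc n) (uu a t) (h j) = Act X m (Suc n) (uu a t) (h j')"
    if a: "dmor m n a" and t: "dmor m 1 t" and f: "fits n m a t j" "fits n m a t j'" for m a t j j'
  proof (cases "j \<le> j'")
    case True then show ?thesis using agree_le[OF a t f] by simp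
  next
    case False then show ?thesis using agree_le[OF a t f(2) f(1)] by simp
  qed
  define HH where "HH m p = Act X m (Suc n) (uu (fst p) (snd p)) (h (JJ m (fst p) (snd p)))" for m p
  have Jn: "JJ m a t \<le> n" if "dmor m n a" "dmor m 1 t" for m a t
    using JJ_fits[OF that] unfolding fits_def by simp
  have sm: "smap (sprod (Delta n) (Delta_t 1)) X HH"
    unfolding smap_def
  proof (intro conjI allI impI)
    fix m p assume "p \<in> Simp (sprod (Delta n) (Delta_t 1)) m"
    then have a: "dmor m n (fst p)" and t: "dmor m 1 (snd p)" unfolding sprod_simp by auto
    show "HH m p \<in> Simp X m" unfolding HH_def by (rule act_simp[OF dmor_uu[OF a t] hs[OF Jn[OF a t]]])
  next
    fix l m g p assume g: "dmor l m g" and "p \<in> Simp (sprod (Delta n) (Delta_t 1)) m"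
    then have a: "dmor m n (fst p)" and t: "dmor m 1 (snd p)" unfolding sprod_simp by auto
    define a' where "a' = dcomp l (fst p) g"
    define t' where "t' = dcomp l (snd p) g"
    have a': "dmor l n a'" "dmor l 1 t'" unfolding a'_def t'_def using dmor_dcomp[OF g a] dmor_dcomp[OF g t] by auto
    have "HH l (Act (sprod (Delta n) (Delta_t 1)) l m g p) = Act X l (Suc n) (uu a' t') (h (JJ l a' t'))"
      unfolding HH_def sprod_act a'_def t'_def by simp
    also have "\<dots> = Act X l (Suc n) (uu a' t') (h (JJ m (fst p) (snd p)))"
      by (rule agree[OF a'(1,2) JJ_fits[OF a']]) (unfold a'_def t'_def, rule fits_comp[OF JJ_fits[OF a t] g])
    also have "uu a' t' = dcomp l (uu (fst p) (snd p)) g" unfolding a'_def t'_def uu_comp ..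
    also have "Act X l (Suc n) (dcomp l (uu (fst p) (snd p)) g) (h (JJ m (fst p) (snd p))) = Act X l m g (HH m p)"
      unfolding HH_def by (rule act_comp[OF g dmor_uu[OF a t] hs[OF Jn[OF a t]], symmetric])
    finally show "HH l (Act (sprod (Delta n) (Delta_t 1)) l m g p) = Act X l m g (HH m p)" .
  next
    fix m p assume "p \<in> Thin (sprod (Delta n) (Delta_t 1)) m"
    then have dg: "fst p \<in> dgn n m" and a: "dmor m n (fst p)" and t: "dmor m 1 (snd p)" using sprod_thin by auto
    define a where "a = fst p"
    define t where "t = snd p"
    define J where "J = JJ m a t"
    have aa: "dmor m n a" "dmor m 1 t" using a t a_def t_def by auto
    have fJ: "fits n m a t J" unfolding J_def by (rule JJ_fits[OF aa])
    have Jn': "J \<le> n" using fJ unfolding fits_def by simp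
    have u: "dmor m (Suc n) (uu a t)" by (rule dmor_uu[OF aa])
    have HHe: "HH m p = Act X m (Suc n) (uu a t) (h J)" unfolding HH_def a_def t_def J_def ..
    obtain i where i: "i < m" "a i = a (Suc i)" using dgn_noninj[OF dg] a_def by blast
    show "HH m p \<in> Thin X m"
    proof (cases "t i = t (Suc i)")
      case True
      then have "uu a t i = uu a t (Suc i)" using i unfolding uu_def by simp
      then show ?thesis using noninj_thin[OF u i(1) _ hs[OF Jn']] HHe by simp
    next
      case False
      have "t i \<le> t (Suc i)" using dmor_mono[OF aa(2), of i "Suc i"] i by simp
      moreover have "t (Suc i) \<le> 1" using dmor_le[OF aa(2), of "Suc i"] i by simp
      ultimately have t0: "t i = 0" "t (Suc i) = 1" using False by auto
      have le1: "a i \<le> J" using fJ t0(1) i(1) unfolding fits_def by simp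
      have le2: "J \<le> a (Suc i)" using fJ t0(2) i(1) unfolding fits_def by simp
      have aJ: "a i = J" using le1 le2 i(2) by simp
      have u1: "uu a t i = J" "uu a t (Suc i) = Suc J" using aJ t0 i unfolding uu_def by auto
      show ?thesis unfolding HHe
      proof (rule thin_check2[OF hthin[OF Jn'], of J "Suc J" "{J, Suc J}"])
        fix s assume "s \<le> Suc n" "s \<notin> {J, Suc J}"
        then show "fa n s (h J) = vconst X n x" using hface[OF Jn', of s] unfolding fcv_def vc_def by auto
      next
        have "J \<in> uu a t ` {0..m}" using image_eqI[of J "uu a t" i "{0..m}"] u1(1) i(1) by simp
        moreover have "Suc J \<in> uu a t ` {0..m}" using image_eqI[of "Suc J" "uu a t" "Suc i" "{0..m}"] u1(2) i(1) by simp
        ultimately show "{J, Suc J} \<subseteq> uu a t ` {0..m}" by simp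
      qed (use u in auto)
    qed
  qed
  have As: "A \<in> Simp X n" "B \<in> Simp X n" using bA bB bc_simp by auto
  have dSuc: "dmor m (Suc n) a" if "dmor m n a" for m a using that unfolding dmor_def by auto
  have end0: "HH m (a, const0 m) = ymap X n A m a" if a: "dmor m n a" for m a
  proof -
    have t: "dmor m 1 (const0 m)" unfolding const0_def dmor_def by simp
    have ua: "uu a (const0 m) = a" unfolding uu_def const0_def by simp
    have fn: "fits n m a (const0 m) n" unfolding fits_def const0_def using dmor_le[OF a] by simp
    have "HH m (a, const0 m) = Act X m (Suc n) (uu a (const0 m)) (h n)"
      unfolding HH_def by simp (rule agree[OF a t JJ_fits[OF a t] fn])
    also have "\<dots> = Act X m (Suc n) a (h n)" using ua by simp
    also have "\<dots> = Act X m n (rm (Suc n) a) (fa n (Suc n) (h n))"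
    proof (rule act_rm[OF hs dSuc[OF a]])
      show "Suc n \<notin> a ` {0..m}" using dmor_le[OF a] by fastforce
    qed simp_all
    also have "rm (Suc n) a = a" unfolding rm_def using dmor_le[OF a] dmor_zero[OF a]
      by (intro ext) (metis le_imp_less_Suc not_less zero_less_Suc)
    also have "fa n (Suc n) (h n) = A" using hface[of n "Suc n"] eN unfolding fcv_def by simp
    finally show ?thesis unfolding ymap_def .
  qed
  have end1: "HH m (a, const1 m) = ymap X n B m a" if a: "dmor m n a" for m a
  proof -
    have t: "dmor m 1 (const1 m)" unfolding const1_def dmor_def by simp
    have f0: "fits n m a (const1 m) 0" unfolding fits_def const1_def by simp
    have u: "dmor m (Suc n) (uu a (const1 m))" by (rule dmor_uu[OF a t])
    have "HH m (a, const1 m) = Act X m (Suc n) (uu a (const1 m)) (h 0)"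
      unfolding HH_def by simp (rule agree[OF a t JJ_fits[OF a t] f0])
    also have "\<dots> = Act X m n (rm 0 (uu a (const1 m))) (fa n 0 (h 0))"
    proof (rule act_rm[OF hs u])
      show "0 \<notin> uu a (const1 m) ` {0..m}" unfolding uu_def const1_def by auto
    qed simp_all
    also have "rm 0 (uu a (const1 m)) = a" unfolding rm_def uu_def const1_def using dmor_zero[OF a]
      by (intro ext) auto
    also have "fa n 0 (h 0) = B" using hface[of 0 0] e0 unfolding fcv_def by simp
    finally show ?thesis unfolding ymap_def .
  qed
  have bnd: "HH m (b, t) = ymap X n A m b" if b: "b \<in> Simp (bdry n) m" and t: "t \<in> Simp (Delta_t 1) m" for m b t
  proof -
    have bd: "dmor m n b" and nb: "b ` {0..m} \<noteq> {0..n}" using b unfolding bdry_def by auto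
    have td: "dmor m 1 t" using t unfolding Delta_t_def strat_delta_def by simp
    have "b ` {0..m} \<subseteq> {0..n}" using dmor_le[OF bd] by auto
    have "\<exists>p. p \<le> n \<and> p \<notin> b ` {0..m}"
    proof (rule ccontr)
      assume "\<not> ?thesis"
      then have "{0..n} \<subseteq> b ` {0..m}" by auto
      with \<open>b ` {0..m} \<subseteq> {0..n}\<close> have "b ` {0..m} = {0..n}" by auto
      with nb show False ..
    qed
    then obtain p where p: "p \<le> n" "p \<notin> b ` {0..m}" by blast
    define J where "J = JJ m b t"
    have fJ: "fits n m b t J" unfolding J_def by (rule JJ_fits[OF bd td])
    have Jn': "J \<le> n" using fJ unfolding fits_def by simp
    have u: "dmor m (Suc n) (uu b t)" by (rule dmor_uu[OF bd td])
    have HHe: "HH m (b, t) = Act X m (Suc n) (uu b t) (h J)" unfolding HH_def J_def by simp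
    have pb: "b i \<noteq> p" if "i \<le> m" for i using p that by auto
    have fit_i: "(t i = 0 \<longrightarrow> b i \<le> J) \<and> (t i \<noteq> 0 \<longrightarrow> J \<le> b i \<and> t i = 1)" if "i \<le> m" for i
      using fJ that t01[OF td that] unfolding fits_def by blast
    have "Act X m (Suc n) (uu b t) (h J) = vconst X m x"
    proof -
      consider "p < J" | "J < p" | "p = J" by linarith
      then show ?thesis
      proof cases
        case 1
        have "p \<notin> uu b t ` {0..m}"
        proof
          assume "p \<in> uu b t ` {0..m}"
          then obtain i where i: "i \<le> m" "b i + t i = p" unfolding uu_def by auto
          then show False using fit_i[OF i(1)] pb[OF i(1)] 1 by auto
        qed
        moreover have "fa n p (h J) = vc" using hface[OF Jn', of p] p 1 unfolding fcv_def by auto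
        moreover have "p \<le> Suc n" using p by simp
        ultimately show ?thesis using miss_vc[OF hs[OF Jn'] u] by blast
      next
        case 2
        have "Suc p \<notin> uu b t ` {0..m}"
        proof
          assume "Suc p \<in> uu b t ` {0..m}"
          then obtain i where i: "i \<le> m" "b i + t i = Suc p" unfolding uu_def by auto
          then show False using fit_i[OF i(1)] pb[OF i(1)] 2 by auto
        qed
        moreover have "fa n (Suc p) (h J) = vc" using hface[OF Jn', of "Suc p"] p 2 unfolding fcv_def by auto
        moreover have "Suc p \<le> Suc n" using p by simp
        ultimately show ?thesis using miss_vc[OF hs[OF Jn'] u] by blast
      next
        case 3
        have m1: "J \<notin> uu b t ` {0..m}"
        proof
          assume "J \<in> uu b t ` {0..m}"
          then obtain i where i: "i \<le> m" "b i + t i = J" unfolding uu_def by auto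
          then show False using fit_i[OF i(1)] pb[OF i(1)] 3 by auto
        qed
        have m2: "Suc J \<notin> uu b t ` {0..m}"
        proof
          assume "Suc J \<in> uu b t ` {0..m}"
          then obtain i where i: "i \<le> m" "b i + t i = Suc J" unfolding uu_def by auto
          then show False using fit_i[OF i(1)] pb[OF i(1)] 3 by auto
        qed
        have "bc (fa n J (h J))" using hface[OF Jn', of J] ebc[of J] Jn' unfolding fcv_def by simp
        then show ?thesis by (rule miss2[OF hs[OF Jn'] u Jn' m1 m2])
      qed
    qed
    moreover have "ymap X n A m b = vconst X m x" using bA b unfolding bdry_const_def ymap_def by simp
    ultimately show ?thesis using HHe by simp
  qed
  show ?thesis
    unfolding shtpy_def htpy_def
  proof (intro conjI allI impI exI[of _ HH])
    show "smap (Delta n) X (ymap X n A)" by (rule ymap_smap[OF As(1)])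
    show "smap (Delta n) X (ymap X n B)" by (rule ymap_smap[OF As(2)])
    show "smap (sprod (Delta n) (Delta_t 1)) X HH" by (rule sm)
  next
    fix m b assume "b \<in> Simp (bdry n) m"
    then show "ymap X n A m b = ymap X n B m b" using bA bB unfolding bdry_const_def ymap_def by simp
  next
    fix m a assume "a \<in> Simp (Delta n) m"
    then have "dmor m n a" unfolding Delta_def strat_delta_def by simp
    then show "HH m (a, const0 m) = ymap X n A m a" "HH m (a, const1 m) = ymap X n B m a"
      using end0 end1 by auto
  next
    fix m b t assume "b \<in> Simp (bdry n) m" "t \<in> Simp (Delta_t 1) m"
    then show "HH m (b, t) = ymap X n A m b" by (rule bnd)
  qed
qed

end

context wcn
begin

lemma wit_mid_bc:
  assumes W: "Wit j h a b c" and j: "Suc j \<le> n" and a: "bc a" and c: "bc c"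
  shows "bc (fa n (Suc j) h)"
proof -
  obtain K where K: "n = Suc K" using n1 by (cases n) auto
  have hs: "h \<in> Simp X (Suc (Suc K))" using Wit_simp[OF W] K by simp
  have hf: "fa (Suc K) i h = fcv j a b c i" if "i \<le> Suc (Suc K)" for i using W that K unfolding Wit_def by simp
  have bs: "fa (Suc K) (Suc j) h \<in> Simp X (Suc K)" by (rule fa_simp[OF hs])
  have af: "fa K s a = vconst X K x" if "s \<le> Suc K" for s using a bc_iff[of a K] bc_simp[OF a] that K by simp
  have cf: "fa K s c = vconst X K x" if "s \<le> Suc K" for s using c bc_iff[of c K] bc_simp[OF c] that K by simp
  have vf: "fa K s vc = vconst X K x" for s using fa_vconst[of K s] K unfolding vc_def by simp
  have "\<forall>s \<le> Suc K. fa K s (fa (Suc K) (Suc j) h) = vconst X K x"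
  proof (intro allI impI)
    fix s assume s: "s \<le> Suc K"
    show "fa K s (fa (Suc K) (Suc j) h) = vconst X K x"
    proof (cases "s < Suc j")
      case True
      have e1: "fa K s (fa (Suc K) (Suc j) h) = fa K j (fa (Suc K) s h)"
        using fa_fa[OF True _ hs] j K by simp
      have jK: "j \<le> Suc K" using j K by simp
      show ?thesis
      proof (cases "s = j")
        case True
        then have "fa (Suc K) s h = a" using hf[of s] s unfolding fcv_def by simp
        then show ?thesis using e1 af[OF jK] by simp
      next
        case False
        then have "fa (Suc K) s h = vc" using hf[of s] s \<open>s < Suc j\<close> unfolding fcv_def by simp
        then show ?thesis using e1 vf by simp
      qed
    next
      case False
      have e1: "fa K (Suc j) (fa (Suc K) (Suc s) h) = fa K s (fa (Suc K) (Suc j) h)"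
        using fa_fa[of "Suc j" "Suc s" K h] hs False s by simp
      have jK: "Suc j \<le> Suc K" using j K by simp
      show ?thesis
      proof (cases "s = Suc j")
        case True
        then have "fa (Suc K) (Suc s) h = c" using hf[of "Suc s"] s unfolding fcv_def by simp
        then show ?thesis using e1 cf[OF jK] by simp
      next
        case False
        then have "fa (Suc K) (Suc s) h = vc" using hf[of "Suc s"] s \<open>\<not> s < Suc j\<close> unfolding fcv_def by simp
        then show ?thesis using e1 vf by simp
      qed
    qed
  qed
  then show ?thesis using bc_iff[OF bs] K by simp
qed

lemma chain_top:
  assumes e: "\<forall>j \<le> n. Pr j (e j) (e (Suc j))"
  shows "Pr n (e 0) (e (Suc n))"
proof -
  have "\<forall>j. j \<le> n \<longrightarrow> Pr n (e 0) (e (Suc j))"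
  proof
    fix j show "j \<le> n \<longrightarrow> Pr n (e 0) (e (Suc j))"
    proof (induction j)
      case 0 then show ?case using e Pr_to_top by auto
    next
      case (Suc j)
      show ?case
      proof
        assume j: "Suc j \<le> n"
        then have "Pr n (e 0) (e (Suc j))" using Suc.IH by simp
        moreover have "Pr n (e (Suc j)) (e (Suc (Suc j)))" using e j Pr_to_top by blast
        ultimately show "Pr n (e 0) (e (Suc (Suc j)))" by (rule Pr_top_trans)
      qed
    qed
  qed
  then show ?thesis by simp
qed

lemma theta_wit:
  assumes sm: "smap (Delta_k n (n + 1)) X \<theta>"
    and a: "\<theta> n (coface n (n - 1)) = a" and b: "\<theta> n (coface n (n + 1)) = b"
    and o: "\<forall>i\<le>n + 1. i \<notin> {n - 1, n, n + 1} \<longrightarrow> \<theta> n (coface n i) = vconst X n x"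
  shows "Wit (n - 1) (\<theta> (Suc n) (didx (Suc n))) a (\<theta> n (coface n n)) b"
proof -
  have dS: "didx (Suc n) \<in> Simp (Delta_k n (n + 1)) (Suc n)" "didx (Suc n) \<in> Thin (Delta_k n (n + 1)) (Suc n)"
    unfolding Delta_k_def strat_delta_def hornset_def using dmor_didx by (auto simp: didx_def image_iff)
  have thin: "\<theta> (Suc n) (didx (Suc n)) \<in> Thin X (Suc n)" using sm dS(2) unfolding smap_def by auto
  have face: "fa n i (\<theta> (Suc n) (didx (Suc n))) = \<theta> n (coface n i)" for i
  proof -
    have "\<theta> n (Act (Delta_k n (n + 1)) n (Suc n) (coface n i) (didx (Suc n))) = Act X n (Suc n) (coface n i) (\<theta> (Suc n) (didx (Suc n)))"
      using sm dS(1) dmor_coface[of n i] unfolding smap_def by simp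
    moreover have "Act (Delta_k n (n + 1)) n (Suc n) (coface n i) (didx (Suc n)) = coface n i"
      unfolding Delta_k_def strat_delta_def using dcomp_didx_left[OF dmor_coface] by simp
    ultimately show ?thesis unfolding fa_def by simp
  qed
  have "fa n i (\<theta> (Suc n) (didx (Suc n))) = fcv (n - 1) a (\<theta> n (coface n n)) b i" if "i \<le> Suc n" for i
    using face[of i] a b o that n1 unfolding fcv_def vc_def by auto
  then show ?thesis unfolding Wit_def using thin by blast
qed

lemma fill_mid:
  assumes a: "bc a" and b: "bc b"
  shows "\<exists>z. Wit (n - 1) z a (fa n n z) b"
proof -
  obtain K where K: "n = Suc K" using n1 by (cases n) auto
  define y where "y i = (if i = K then a else if i = Suc (Suc K) then b else vconst X (Suc K) x)" for i
  have yf: "fa K s (y i) = vconst X K x" if "s \<le> Suc K" for s i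
    using a b bc_iff[of a K] bc_iff[of b K] bc_simp[OF a] bc_simp[OF b] that K fa_vconst
    unfolding y_def by auto
  have ys: "y i \<in> Simp X (Suc K)" for i using bc_simp[OF a] bc_simp[OF b] vconst_simp K unfolding y_def by auto
  have "\<exists>z. z \<in> Thin X (Suc (Suc K)) \<and> (\<forall>i \<le> Suc (Suc K). i \<noteq> Suc K \<longrightarrow> fa (Suc K) i z = y i)
     \<and> ((\<forall>i \<le> Suc (Suc K). i \<noteq> Suc K \<longrightarrow> y i \<in> Thin X (Suc K)) \<longrightarrow> fa (Suc K) (Suc K) z \<in> Thin X (Suc K))"
  proof (rule horn_fill)
    show "Suc K \<le> Suc (Suc K)" by simp
  next
    fix i assume "i \<le> Suc (Suc K)" "i \<noteq> Suc K" then show "y i \<in> Simp X (Suc K)" using ys by blast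
  next
    fix i r assume "i < r" "r \<le> Suc (Suc K)" "i \<noteq> Suc K" "r \<noteq> Suc K"
    then show "fa K i (y r) = fa K (r - 1) (y i)" using yf by simp
  next
    fix i m u assume i: "i \<le> Suc (Suc K)" "i \<noteq> Suc K" "i \<notin> hornset (Suc K) (Suc (Suc K))"
      and u: "dmor m (Suc K) u" and H: "hornset (Suc K) (Suc (Suc K)) \<subseteq> (\<lambda>t. coface (Suc K) i (u t)) ` {0..m}"
    have yi: "y i = vconst X (Suc K) x" using i unfolding y_def hornset_def by auto
    obtain p q where pq: "p \<noteq> q" "p \<in> hornset (Suc K) (Suc (Suc K))" "q \<in> hornset (Suc K) (Suc (Suc K))"
      using hornset_two[of "Suc K" "Suc (Suc K)"] by auto
    have "p \<in> (\<lambda>t. coface (Suc K) i (u t)) ` {0..m}" "q \<in> (\<lambda>t. coface (Suc K) i (u t)) ` {0..m}" using pq H by auto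
    then have m1: "1 \<le> m" by (rule two_dim[OF pq(1), where v="\<lambda>t. coface (Suc K) i (u t)"])
    show "Act X m (Suc K) u (y i) \<in> Thin X m" using yi act_vconst[OF u] vconst_thin[OF m1] by simp
  qed
  then obtain z where z: "z \<in> Thin X (Suc (Suc K))" "\<And>i. i \<le> Suc (Suc K) \<Longrightarrow> i \<noteq> Suc K \<Longrightarrow> fa (Suc K) i z = y i"
    by blast
  define g where "g = fa n n z"
  have "fa n i z = fcv (n - 1) a g b i" if "i \<le> Suc n" for i
    using z(2)[of i] that K unfolding fcv_def y_def vc_def g_def by auto
  moreover have "z \<in> Thin X (Suc n)" using z(1) K by simp
  ultimately have "Wit (n - 1) z a g b" unfolding Wit_def by blast
  then show ?thesis unfolding g_def by blast
qed

end

context wcn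
begin

lemma main_lemma:
  assumes ba: "bc \<alpha>" and ba': "bc \<alpha>'" and bb: "bc \<beta>" and bb': "bc \<beta>'"
    and Sa: "shtpy X n \<alpha> \<alpha>'" and Sb: "shtpy X n \<beta> \<beta>'"
    and sm: "smap (Delta_k n (n + 1)) X \<theta>"
    and t1: "\<theta> n (coface n (n - 1)) = \<alpha>" and t2: "\<theta> n (coface n (n + 1)) = \<beta>"
    and t3: "\<forall>i\<le>n + 1. i \<notin> {n - 1, n, n + 1} \<longrightarrow> \<theta> n (coface n i) = vconst X n x"
    and sm': "smap (Delta_k n (n + 1)) X \<theta>'"
    and t1': "\<theta>' n (coface n (n - 1)) = \<alpha>'" and t2': "\<theta>' n (coface n (n + 1)) = \<beta>'"
    and t3': "\<forall>i\<le>n + 1. i \<notin> {n - 1, n, n + 1} \<longrightarrow> \<theta>' n (coface n i) = vconst X n x"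
  shows "shtpy X n (\<theta> n (coface n n)) (\<theta>' n (coface n n))"
proof -
  define j where "j = n - 1"
  have jn: "Suc j = n" "Suc j \<le> n" using n1 j_def by auto
  define \<gamma> where "\<gamma> = \<theta> n (coface n n)"
  define \<gamma>' where "\<gamma>' = \<theta>' n (coface n n)"
  have W: "Wit j (\<theta> (Suc n) (didx (Suc n))) \<alpha> \<gamma> \<beta>" unfolding j_def \<gamma>_def by (rule theta_wit[OF sm t1 t2 t3])
  have W': "Wit j (\<theta>' (Suc n) (didx (Suc n))) \<alpha>' \<gamma>' \<beta>'" unfolding j_def \<gamma>'_def by (rule theta_wit[OF sm' t1' t2' t3'])
  obtain z where Wz0: "Wit (n - 1) z \<alpha>' (fa n n z) \<beta>" using fill_mid[OF ba' bb] by blast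
  define \<gamma>'' where "\<gamma>'' = fa n n z"
  have Wz: "Wit j z \<alpha>' \<gamma>'' \<beta>" using Wz0 unfolding j_def \<gamma>''_def .
  have mid: "fa n n h = b" if "Wit j h a b c" for h a b c
    using that jn unfolding Wit_def fcv_def by auto
  have bg: "bc \<gamma>" using wit_mid_bc[OF W jn(2) ba bb] mid[OF W] jn by simp
  have bg': "bc \<gamma>'" using wit_mid_bc[OF W' jn(2) ba' bb'] mid[OF W'] jn by simp
  have bg'': "bc \<gamma>''" using wit_mid_bc[OF Wz jn(2) ba' bb] mid[OF Wz] jn by simp
  have Pa: "Pr n \<alpha>' \<alpha>"
  proof -
    obtain e where e: "e 0 = \<alpha>'" "e (Suc n) = \<alpha>" "\<forall>j \<le> n. Pr j (e j) (e (Suc j))"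
      using destruct[OF Sa ba ba'] by blast
    show ?thesis using chain_top[OF e(3)] e(1,2) by simp
  qed
  have Pb: "Pr n \<beta>' \<beta>"
  proof -
    obtain e where e: "e 0 = \<beta>'" "e (Suc n) = \<beta>" "\<forall>j \<le> n. Pr j (e j) (e (Suc j))"
      using destruct[OF Sb bb bb'] by blast
    show ?thesis using chain_top[OF e(3)] e(1,2) by simp
  qed
  have "Pr (Suc j) \<alpha>' \<alpha>" using Pa jn by simp
  then have W0: "\<exists>h. Wit j h vc \<alpha>' \<alpha>" unfolding Pr_suc by blast
  have "\<exists>h. Wit j h vc \<gamma>'' \<gamma>" by (rule mv_d[OF jn(2) W0]) (use Wz W in blast)+
  then have "Pr (Suc j) \<gamma>'' \<gamma>" unfolding Pr_suc using bg bg'' by blast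
  then have P1: "Pr n \<gamma>'' \<gamma>" using jn by simp
  have "Pr n \<beta> \<beta>'" using Pr_top_sym[OF Pb] .
  have jle: "j \<le> n" using jn by simp
  then have "Pr j \<beta> \<beta>'" using Pr_from_top[OF jle \<open>Pr n \<beta> \<beta>'\<close>] by simp
  then have W3: "\<exists>h. Wit j h \<beta> \<beta>' vc" unfolding Pr_def by blast
  have "\<exists>h. Wit j h \<gamma>'' \<gamma>' vc" by (rule mv_e[OF jn(2) _ _ W3]) (use Wz W' in blast)+
  then have "Pr j \<gamma>'' \<gamma>'" unfolding Pr_def using bg' bg'' by blast
  then have P2: "Pr n \<gamma>'' \<gamma>'" by (rule Pr_to_top[OF jle])
  have "Pr n \<gamma> \<gamma>'" using Pr_top_trans[OF Pr_top_sym[OF P1] P2] .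
  then have "Pr n \<gamma>' \<gamma>" by (rule Pr_top_sym)
  then have P0: "Pr 0 \<gamma>' \<gamma>" by (rule Pr_from_top[OF le0])
  define e where "e i = (if i = 0 then \<gamma>' else \<gamma>)" for i :: nat
  have "\<forall>j \<le> n. Pr j (e j) (e (Suc j))"
  proof (intro allI impI)
    fix i assume i: "i \<le> n"
    show "Pr i (e i) (e (Suc i))"
    proof (cases "i = 0")
      case True then show ?thesis using P0 unfolding e_def by simp
    next
      case False then show ?thesis using Pr_refl[OF bg i] unfolding e_def by simp
    qed
  qed
  moreover have e0: "e 0 = \<gamma>'" "e (Suc n) = \<gamma>" unfolding e_def by simp_all
  ultimately have "shtpy X n \<gamma> \<gamma>'" using construct[OF bg bg' e0] by blast
  then show ?thesis unfolding \<gamma>_def \<gamma>'_def .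
qed

end

theorem mainTheorem3:
  fixes X :: "'a sset" and x :: 'a and n :: nat
    and \<alpha> \<alpha>' \<beta> \<beta>' :: 'a
    and \<theta> \<theta>' :: "nat \<Rightarrow> (nat \<Rightarrow> nat) \<Rightarrow> 'a"
  assumes "weak_complicial X"
    and "x \<in> Simp X 0"
    and "1 \<le> n"
    and "bdry_const X n x \<alpha>" and "bdry_const X n x \<alpha>'"
    and "bdry_const X n x \<beta>" and "bdry_const X n x \<beta>'"
    and "shtpy X n \<alpha> \<alpha>'" and "shtpy X n \<beta> \<beta>'"
    and "smap (Delta_k n (n + 1)) X \<theta>"
    and "\<theta> n (coface n (n - 1)) = \<alpha>" and "\<theta> n (coface n (n + 1)) = \<beta>"
    and "\<forall>i\<le>n + 1. i \<notin> {n - 1, n, n + 1} \<longrightarrow> \<theta> n (coface n i) = vconst X n x"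
    and "smap (Delta_k n (n + 1)) X \<theta>'"
    and "\<theta>' n (coface n (n - 1)) = \<alpha>'" and "\<theta>' n (coface n (n + 1)) = \<beta>'"
    and "\<forall>i\<le>n + 1. i \<notin> {n - 1, n, n + 1} \<longrightarrow> \<theta>' n (coface n i) = vconst X n x"
  shows "shtpy X n (\<theta> n (coface n n)) (\<theta>' n (coface n n))"
proof -
  have ss: "simplicial_set X" using assms(1) unfolding weak_complicial_def stratified_def by simp
  interpret wcn X x n
    by (unfold_locales) (use ss assms(1-3) in auto)
  show ?thesis by (rule main_lemma) (use assms in auto)
qed

end
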